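(* Let $\beta>0$, $N\ge 4$, $\Lambda=(\mathbb{Z}/N\mathbb{Z})^2$ and $i,j\in\Lambda$ with $i\ne j$. Then for every $x\in\Omega_{i,j}$, \[ H_\Lambda(x)-H_\Lambda(F_{i,j}(x))\ge|\gamma_{i,j}(x)|. \] Moreover, for every $\gamma\in\Gamma_{i,j}$ and $k\in\mathbb{N}$, \[ P_{\Lambda,\beta}\big(x_i-x_j\ge k,\ \gamma_{i,j}(x)=\gamma\big)\le e^{-\beta|\gamma|}P_{\Lambda,\beta}(x_i-x_j\ge k-1), \] hence \[ P_{\Lambda,\beta}(x_i-x_j\ge k)\le P_{\Lambda,\beta}(x_i-x_j\ge k-1)\sum_{\gamma\in\Gamma_{i,j}}e^{-\beta|\gamma|}, \qquad P_{\Lambda,\beta}(x_i-x_j\ge k)\le\Big(\sum_{\gamma\in\Gamma_{i,j}}e^{-\beta|\gamma|}\Big)^k. \]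
   Context: $\Lambda=(\mathbb{Z}/N\mathbb{Z})^2$ is the $N\times N$ box with periodic boundary conditions containing $0$, $\mathcal{E}_\Lambda$ its nearest-neighbour edges. $\Omega_\Lambda=\{x\in\mathbb{Z}^\Lambda:x_0=0\}$, $H_\Lambda(x)=\sum_{\{l,m\}\in\mathcal{E}_\Lambda}(x_l-x_m)^2$, and $P_{\Lambda,\beta}=Z_{\Lambda,\beta}^{-1}\sum_{x\in\Omega_\Lambda}e^{-\beta H_\Lambda(x)}\delta_x$ with $Z_{\Lambda,\beta}=\sum_{x\in\Omega_\Lambda}e^{-\beta H_\Lambda(x)}$. Contours: let $\Lambda^*=\Lambda+(1/2,1/2)$ be the dual torus; each edge $\{l,m\}\in\mathcal{E}_\Lambda$ is crossed by a unique dual edge $\{l,m\}^*$. Let $\Omega_{i,j}=\{x\in\Omega_\Lambda:x_i>x_j\}$. For $x\in\Omega_{i,j}$ let $C_i$ be the connected component containing $i$ of $\{k\in\Lambda:x_k\ge x_i\}$, and $\partial C_i$ the set of dual edges $\{l,m\}^*$ with $l\in C_i$, $m\notin C_i$, oriented so that the vertex in $C_i$ lies to the left. Split $\partial C_i$ into closed self-avoiding dual contours (at a dual vertex where four boundary edges meet, use the North-West/South-East splitting rule). A contour winds around the torus iff the sum of its direction vectors is non-zero; exactly one of the following holds: (1) exactly one non-winding contour of $\partial C_i$ separates $i$ from $j$ (every nearest-neighbour path from $i$ to $j$ crosses an edge whose dual lies in it), and $\gamma_{i,j}(x)$ is this contour; or (2) $\partial C_i$ contains exactly two winding contours $\gamma_-,\gamma_+$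 whose union separates $i$ from $j$, and $\gamma_{i,j}(x):=\gamma_-\cup\gamma_+$. $|\gamma|$ denotes the number of dual edges of $\gamma$, and $\Gamma_{i,j}:=\{\gamma_{i,j}(x):x\in\Omega_{i,j}\}$. Let $\mathcal{L}_i(\gamma)$ be the set of $k\in\Lambda$ not separated from $i$ by $\gamma$. Define $F_{i,j}:\Omega_{i,j}\to\Omega_\Lambda$ by $F_{i,j}(x)_l=x_l-\mathbf{1}_{\mathcal{L}_i(\gamma_{i,j}(x))}(l)-x_0+\mathbf{1}_{\mathcal{L}_i(\gamma_{i,j}(x))}(0)$. *)

theory Defs
  imports "HOL-Analysis.Analysis"
begin

text \<open>A dual vertex (a,b) represents the point (a+1/2, b+1/2) of the dual torus.\<close>

type_synonym vert = "nat \<times> nat"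

definition torus :: "nat \<Rightarrow> vert set" where
  "torus N = {0..<N} \<times> {0..<N}"

definition units :: "(int \<times> int) set" where
  "units = {(1,0), (-1,0), (0,1), (0,-1)}"

definition negv :: "int \<times> int \<Rightarrow> int \<times> int" where
  "negv d = (- fst d, - snd d)"

text \<open>translation on the torus (also used for the dual torus)\<close>
definition shiftv :: "nat \<Rightarrow> vert \<Rightarrow> int \<times> int \<Rightarrow> vert" where
  "shiftv N v d = (nat ((int (fst v) + fst d) mod int N), nat ((int (snd v) + snd d) mod int N))"

definition nn_adj :: "nat \<Rightarrow> vert \<Rightarrow> vert \<Rightarrow> bool" where
  "nn_adj N l m \<longleftrightarrow> l \<in> torus N \<and> (\<exists>d\<in>units. m = shiftv N l d)"

definition edges :: "nat \<Rightarrow> vert set set" where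
  "edges N = {{l, m} | l m. nn_adj N l m}"

text \<open>Hamiltonian: for an edge e = {l,m}, (x_l - x_m)^2 = (max - min)^2 over x`e.\<close>
definition H :: "nat \<Rightarrow> (vert \<Rightarrow> int) \<Rightarrow> int" where
  "H N x = (\<Sum>e\<in>edges N. (Max (x ` e) - Min (x ` e))^2)"

definition Omega :: "nat \<Rightarrow> (vert \<Rightarrow> int) set" where
  "Omega N = {x. x (0,0) = 0 \<and> (\<forall>v. v \<notin> torus N \<longrightarrow> x v = 0)}"

definition gw :: "nat \<Rightarrow> real \<Rightarrow> (vert \<Rightarrow> int) \<Rightarrow> real" where
  "gw N \<beta> x = exp (- \<beta> * real_of_int (H N x))"

definition Zpart :: "nat \<Rightarrow> real \<Rightarrow> real" where
  "Zpart N \<beta> = infsum (gw N \<beta>) (Omega N)"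

definition Prob :: "nat \<Rightarrow> real \<Rightarrow> (vert \<Rightarrow> int) set \<Rightarrow> real" where
  "Prob N \<beta> A = infsum (gw N \<beta>) (Omega N \<inter> A) / Zpart N \<beta>"

definition Omega_ij :: "nat \<Rightarrow> vert \<Rightarrow> vert \<Rightarrow> (vert \<Rightarrow> int) set" where
  "Omega_ij N i j = {x \<in> Omega N. x i > x j}"

definition comp :: "nat \<Rightarrow> (vert \<Rightarrow> int) \<Rightarrow> vert \<Rightarrow> vert set" where
  "comp N x i = {k \<in> torus N.
     (\<lambda>a b. nn_adj N a b \<and> x a \<ge> x i \<and> x b \<ge> x i)\<^sup>*\<^sup>* i k}"

text \<open>Oriented dual edges are pairs (s, t): start dual vertex s, unit direction t;
  the end vertex is shiftv N s t. The dual of the primal edge from l to l+d,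
  oriented so that l lies to its left.\<close>
type_synonym dedge = "vert \<times> (int \<times> int)"

definition dualedge :: "nat \<Rightarrow> vert \<Rightarrow> int \<times> int \<Rightarrow> dedge" where
  "dualedge N l d =
     (shiftv N l ((fst d + snd d - 1) div 2, (snd d - fst d - 1) div 2), (- snd d, fst d))"

definition dend :: "nat \<Rightarrow> dedge \<Rightarrow> vert" where
  "dend N e = shiftv N (fst e) (snd e)"

definition bdry :: "nat \<Rightarrow> (vert \<Rightarrow> int) \<Rightarrow> vert \<Rightarrow> dedge set" where
  "bdry N x i = {dualedge N l d | l d. l \<in> comp N x i \<and> d \<in> units \<and> shiftv N l d \<notin> comp N x i}"

text \<open>Successor of a boundary edge: the unique outgoing boundary edge at its endpoint,
  or, when four boundary edges meet, the one given by the North-West/South-East rule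
  (the North side is paired with the West side, the South side with the East side).\<close>
definition dsucc :: "nat \<Rightarrow> dedge set \<Rightarrow> dedge \<Rightarrow> dedge" where
  "dsucc N B e = (let v = dend N e; Out = {e'\<in>B. fst e' = v} in
     if card Out = 1 then the_elem Out else (v, (snd (snd e), fst (snd e))))"

definition contours :: "nat \<Rightarrow> dedge set \<Rightarrow> dedge set set" where
  "contours N B = {{(dsucc N B ^^ n) e | n. True} | e. e \<in> B}"

definition winding :: "dedge set \<Rightarrow> bool" where
  "winding c \<longleftrightarrow> (\<Sum>e\<in>c. snd e) \<noteq> (0, 0)"

definition avoid :: "nat \<Rightarrow> dedge set \<Rightarrow> vert \<Rightarrow> vert \<Rightarrow> bool" where
  "avoid N g a b \<longleftrightarrow> a \<in> torus N \<and> (\<exists>d\<in>units. b = shiftv N a d \<and>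
       dualedge N a d \<notin> g \<and> dualedge N b (negv d) \<notin> g)"

definition separates :: "nat \<Rightarrow> dedge set \<Rightarrow> vert \<Rightarrow> vert \<Rightarrow> bool" where
  "separates N g i j \<longleftrightarrow> \<not> (avoid N g)\<^sup>*\<^sup>* i j"

definition Lset :: "nat \<Rightarrow> dedge set \<Rightarrow> vert \<Rightarrow> vert set" where
  "Lset N g i = {k \<in> torus N. (avoid N g)\<^sup>*\<^sup>* i k}"

definition gamma :: "nat \<Rightarrow> vert \<Rightarrow> vert \<Rightarrow> (vert \<Rightarrow> int) \<Rightarrow> dedge set" where
  "gamma N i j x = (let Cs = contours N (bdry N x i) in
     if (\<exists>!c. c \<in> Cs \<and> \<not> winding c \<and> separates N c i j)
     then (THE c. c \<in> Cs \<and> \<not> winding c \<and> separates N c i j)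
     else \<Union>{c \<in> Cs. winding c})"

definition Gamma :: "nat \<Rightarrow> vert \<Rightarrow> vert \<Rightarrow> dedge set set" where
  "Gamma N i j = gamma N i j ` Omega_ij N i j"

definition F :: "nat \<Rightarrow> vert \<Rightarrow> vert \<Rightarrow> (vert \<Rightarrow> int) \<Rightarrow> (vert \<Rightarrow> int)" where
  "F N i j x = (\<lambda>l. if l \<in> torus N then
      x l - of_bool (l \<in> Lset N (gamma N i j x) i) - x (0,0)
          + of_bool ((0,0) \<in> Lset N (gamma N i j x) i)
    else 0)"

end

theory Submission
  imports Defs
begin

lemma torus_iff: "v \<in> torus N \<longleftrightarrow> fst v < N \<and> snd v < N"
  by (cases v) (auto simp: torus_def)

lemma sh_torus: "N > 0 \<Longrightarrow> shiftv N v d \<in> torus N"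
  unfolding shiftv_def torus_iff
  by (simp add: nat_less_iff)

lemma sh_add: "N > 0 \<Longrightarrow> shiftv N (shiftv N v d) e = shiftv N v (fst d + fst e, snd d + snd e)"
  unfolding shiftv_def by (simp add: mod_add_left_eq add.assoc)

lemma sh_zero: "v \<in> torus N \<Longrightarrow> shiftv N v (0,0) = v"
  unfolding shiftv_def torus_iff by (cases v) auto

lemma sh_eq: assumes "N > 0" "v \<in> torus N" "w \<in> torus N"
  shows "shiftv N v d = w \<longleftrightarrow> v = shiftv N w (- fst d, - snd d)"
proof
  assume "shiftv N v d = w"
  then have "shiftv N w (- fst d, - snd d) = shiftv N v (0,0)" using sh_add[OF assms(1), of v d "(- fst d, - snd d)"] by simp
  then show "v = shiftv N w (- fst d, - snd d)" using sh_zero[OF assms(2)] by simp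
next
  assume "v = shiftv N w (- fst d, - snd d)"
  then have "shiftv N v d = shiftv N w (0,0)" using sh_add[OF assms(1), of w "(- fst d, - snd d)" d] by simp
  then show "shiftv N v d = w" using sh_zero[OF assms(3)] by simp
qed

lemma sh_inj: assumes "N > 0" "v \<in> torus N" "w \<in> torus N" "shiftv N v d = shiftv N w d"
  shows "v = w"
  using sh_eq[OF assms(1,2) sh_torus[OF assms(1)], of d w d] sh_eq[OF assms(1,3) sh_torus[OF assms(1)], of d w d] assms(4)
  by simp

lemma small_mod_eq: fixes a b c :: int assumes "N \<ge> 3" "(a + b) mod int N = (a + c) mod int N" "\<bar>b - c\<bar> \<le> 2"
  shows "b = c"
proof -
  have "int N dvd (a + b) - (a + c)" using assms(2) by (simp add: mod_eq_dvd_iff)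
  then have "int N dvd (b - c)" by simp
  then obtain k where k: "b - c = int N * k" by (auto simp: dvd_def)
  show ?thesis
  proof (cases "k = 0")
    case True then show ?thesis using k by simp
  next
    case False
    then have "\<bar>int N * k\<bar> \<ge> int N" by (simp add: abs_mult) (metis abs_ge_self dual_order.trans int_one_le_iff_zero_less less_le mult_le_cancel_left1 not_less zero_less_abs_iff abs_of_nonneg of_nat_0_le_iff)
    then show ?thesis using k assms(1,3) by linarith
  qed
qed


lemma units_iff: "d \<in> units \<longleftrightarrow> d = (1,0) \<or> d = (-1,0) \<or> d = (0,1) \<or> d = (0,-1)"
  by (auto simp: units_def)

lemma dualedge_E: "dualedge N l (1,0) = (shiftv N l (0,-1), (0,1))" by (simp add: dualedge_def)
lemma dualedge_W: "dualedge N l (-1,0) = (shiftv N l (-1,0), (0,-1))" by (simp add: dualedge_def)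
lemma dualedge_N: "dualedge N l (0,1) = (shiftv N l (0,0), (-1,0))" by (simp add: dualedge_def)
lemma dualedge_S: "dualedge N l (0,-1) = (shiftv N l (-1,-1), (1,0))" by (simp add: dualedge_def)

lemma sh_units_inj: assumes "N \<ge> 3" "d \<in> units" "d' \<in> units" "shiftv N v d = shiftv N v d'"
  shows "d = d'"
proof -
  have 1: "(int (fst v) + fst d) mod int N = (int (fst v) + fst d') mod int N"
    using assms(1,4) unfolding shiftv_def by (simp add: eq_nat_nat_iff)
  have 2: "(int (snd v) + snd d) mod int N = (int (snd v) + snd d') mod int N"
    using assms(1,4) unfolding shiftv_def by (simp add: eq_nat_nat_iff)
  have "\<bar>fst d - fst d'\<bar> \<le> 2" "\<bar>snd d - snd d'\<bar> \<le> 2" using assms(2,3) by (auto simp: units_iff)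
  then have "fst d = fst d'" "snd d = snd d'" using small_mod_eq[OF assms(1) 1] small_mod_eq[OF assms(1) 2] by auto
  then show ?thesis by (simp add: prod_eq_iff)
qed

lemma sh_ne: assumes "N \<ge> 3" "d \<in> units" shows "shiftv N v d \<noteq> shiftv N v (0,0)"
proof
  assume a: "shiftv N v d = shiftv N v (0,0)"
  have 1: "(int (fst v) + fst d) mod int N = (int (fst v) + 0) mod int N"
    using a assms(1) unfolding shiftv_def by (simp add: eq_nat_nat_iff)
  have 2: "(int (snd v) + snd d) mod int N = (int (snd v) + 0) mod int N"
    using a assms(1) unfolding shiftv_def by (simp add: eq_nat_nat_iff)
  have "\<bar>fst d - 0\<bar> \<le> 2" "\<bar>snd d - 0\<bar> \<le> 2" using assms(2) by (auto simp: units_iff)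
  then have "fst d = 0" "snd d = 0" using small_mod_eq[OF assms(1) 1] small_mod_eq[OF assms(1) 2] by auto
  then show False using assms(2) by (auto simp: units_iff)
qed


locale tor = fixes N :: nat assumes N4: "4 \<le> N"
begin

lemma Npos: "N > 0" using N4 by simp
lemma N3: "N \<ge> 3" using N4 by simp

lemmas shs = sh_add[OF Npos] sh_torus[OF Npos]

lemma dualedge_inj: assumes "l \<in> torus N" "l' \<in> torus N" "d \<in> units" "d' \<in> units"
  "dualedge N l d = dualedge N l' d'" shows "l = l' \<and> d = d'"
proof -
  have "d = d'" using assms(5) unfolding dualedge_def by (auto simp: prod_eq_iff)
  then show ?thesis using assms sh_inj[OF Npos assms(1,2)] unfolding dualedge_def by auto
qed

lemma dual_fst: "fst (dualedge N l d) \<in> torus N" "d \<in> units \<Longrightarrow> snd (dualedge N l d) \<in> units"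
  using shs by (auto simp: dualedge_def units_iff)

lemma fst_dual_iff: assumes "l \<in> torus N" "d \<in> units" "v \<in> torus N"
  shows "fst (dualedge N l d) = v \<longleftrightarrow> (d = (0,1) \<and> l = v) \<or> (d = (1,0) \<and> l = shiftv N v (0,1))
     \<or> (d = (-1,0) \<and> l = shiftv N v (1,0)) \<or> (d = (0,-1) \<and> l = shiftv N v (1,1))"
proof -
  note e = sh_eq[OF Npos assms(1,3)]
  consider "d = (1,0)" | "d = (-1,0)" | "d = (0,1)" | "d = (0,-1)" using assms(2) by (auto simp: units_iff)
  then show ?thesis
  proof cases
    case 1 then show ?thesis using e[of "(0,-1)"] by (simp add: dualedge_E)
  next
    case 2 then show ?thesis using e[of "(-1,0)"] by (simp add: dualedge_W)
  next
    case 3 then show ?thesis using sh_zero[OF assms(1)] by (simp add: dualedge_N)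
  next
    case 4 then show ?thesis using e[of "(-1,-1)"] by (simp add: dualedge_S)
  qed
qed

lemma dend_dual: assumes "l \<in> torus N" shows
  "dend N (dualedge N l (1,0)) = l" "dend N (dualedge N l (-1,0)) = shiftv N l (-1,-1)"
  "dend N (dualedge N l (0,1)) = shiftv N l (-1,0)" "dend N (dualedge N l (0,-1)) = shiftv N l (0,-1)"
  using shs sh_zero[OF assms] by (auto simp: dend_def dualedge_E dualedge_W dualedge_N dualedge_S)

lemma dend_dual_iff: assumes "l \<in> torus N" "d \<in> units" "v \<in> torus N"
  shows "dend N (dualedge N l d) = v \<longleftrightarrow> (d = (1,0) \<and> l = v) \<or> (d = (0,1) \<and> l = shiftv N v (1,0))
     \<or> (d = (-1,0) \<and> l = shiftv N v (1,1)) \<or> (d = (0,-1) \<and> l = shiftv N v (0,1))"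
proof -
  note e = sh_eq[OF Npos assms(1,3)]
  consider "d = (1,0)" | "d = (-1,0)" | "d = (0,1)" | "d = (0,-1)" using assms(2) by (auto simp: units_iff)
  then show ?thesis
  proof cases
    case 1 then show ?thesis using dend_dual[OF assms(1)] by simp
  next
    case 2 then show ?thesis using dend_dual[OF assms(1)] e[of "(-1,-1)"] by simp
  next
    case 3 then show ?thesis using dend_dual[OF assms(1)] e[of "(-1,0)"] by simp
  next
    case 4 then show ?thesis using dend_dual[OF assms(1)] e[of "(0,-1)"] by simp
  qed
qed

end

locale cfg = tor + fixes x :: "vert \<Rightarrow> int" and i :: vert assumes i_t: "i \<in> torus N"
begin

abbreviation "C \<equiv> comp N x i"
abbreviation "B \<equiv> bdry N x i"

lemma C_sub: "C \<subseteq> torus N" by (auto simp: comp_def)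
lemma i_C: "i \<in> C" using i_t by (auto simp: comp_def)

lemma C_ge: assumes "k \<in> C" shows "x i \<le> x k"
proof -
  have "(\<lambda>a b. nn_adj N a b \<and> x a \<ge> x i \<and> x b \<ge> x i)\<^sup>*\<^sup>* i k" using assms by (auto simp: comp_def)
  then show ?thesis by (induction rule: rtranclp_induct) auto
qed

lemma C_step: assumes "a \<in> C" "d \<in> units" "x i \<le> x (shiftv N a d)" shows "shiftv N a d \<in> C"
proof -
  have r: "(\<lambda>a b. nn_adj N a b \<and> x a \<ge> x i \<and> x b \<ge> x i)\<^sup>*\<^sup>* i a" using assms by (auto simp: comp_def)
  have "nn_adj N a (shiftv N a d)" using assms C_sub by (auto simp: nn_adj_def)
  then have "(\<lambda>a b. nn_adj N a b \<and> x a \<ge> x i \<and> x b \<ge> x i)\<^sup>*\<^sup>* i (shiftv N a d)"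
    using rtranclp.rtrancl_into_rtrancl[OF r] C_ge[OF assms(1)] assms(3) by auto
  then show ?thesis using shs by (auto simp: comp_def)
qed

lemma dual_in_B: assumes "l \<in> torus N" "d \<in> units"
  shows "dualedge N l d \<in> B \<longleftrightarrow> l \<in> C \<and> shiftv N l d \<notin> C"
proof
  assume "dualedge N l d \<in> B"
  then obtain l' d' where "l' \<in> C" "d' \<in> units" "shiftv N l' d' \<notin> C" "dualedge N l d = dualedge N l' d'"
    by (auto simp: bdry_def)
  then show "l \<in> C \<and> shiftv N l d \<notin> C" using dualedge_inj[OF assms(1) _ assms(2)] C_sub by blast
next
  assume "l \<in> C \<and> shiftv N l d \<notin> C"
  then show "dualedge N l d \<in> B" using assms unfolding bdry_def by (intro CollectI exI[of _ l] exI[of _ d]) simp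
qed

lemma B_elem: assumes "e \<in> B" obtains l d where "l \<in> C" "d \<in> units" "shiftv N l d \<notin> C" "e = dualedge N l d"
proof -
  from assms obtain l d where "l \<in> C" "d \<in> units" "shiftv N l d \<notin> C" "e = dualedge N l d"
    unfolding bdry_def by blast
  then show ?thesis using that by blast
qed

lemma B_sub: "B \<subseteq> torus N \<times> units"
proof
  fix e assume "e \<in> B"
  then obtain l d where "d \<in> units" "e = dualedge N l d" unfolding bdry_def by blast
  then show "e \<in> torus N \<times> units" using dual_fst[where l=l and d=d] by (simp add: mem_Times_iff)
qed

lemma finite_torus: "finite (torus N)" by (simp add: torus_def)
lemma finite_units: "finite units" by (simp add: units_def)
lemma finite_B: "finite B" using B_sub finite_torus finite_units finite_subset by blast

end

lemma comb_card:
  fixes a b c d :: bool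
  defines "Os \<equiv> (if a \<and> \<not> c then {(-1,0)} else {}) \<union> (if c \<and> \<not> d then {(0,1)} else {})
     \<union> (if b \<and> \<not> a then {(0,-1)} else {}) \<union> (if d \<and> \<not> b then {(1::int,0::int)} else {})"
  defines "Is \<equiv> \<lambda>t::int\<times>int. (t=(0,1) \<and> a \<and> \<not> b) \<or> (t=(-1,0) \<and> b \<and> \<not> d) \<or> (t=(0,-1) \<and> d \<and> \<not> c) \<or> (t=(1,0) \<and> c \<and> \<not> a)"
  shows "Is t \<Longrightarrow> card Os \<noteq> 1 \<Longrightarrow> (snd t, fst t) \<in> Os"
    and "Is t \<Longrightarrow> Is t' \<Longrightarrow> card Os = 1 \<Longrightarrow> t = t'"
  unfolding Os_def Is_def
  by (cases a; cases b; cases c; cases d; auto)+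

context tor begin
lemma sh_add2[simp]: "shiftv N (shiftv N v (a,b)) (c,d) = shiftv N v (a+c, b+d)"
  using sh_add[OF Npos, of v "(a,b)" "(c,d)"] by simp
lemma sh_zero2[simp]: "shiftv N (shiftv N v d) (0,0) = shiftv N v d"
  using sh_zero[OF sh_torus[OF Npos]] by simp
end

context cfg begin

definition outc :: "vert \<Rightarrow> int \<times> int \<Rightarrow> bool" where
  "outc v t \<longleftrightarrow> (t = (-1,0) \<and> v \<in> C \<and> shiftv N v (0,1) \<notin> C) \<or> (t = (0,1) \<and> shiftv N v (0,1) \<in> C \<and> shiftv N v (1,1) \<notin> C)
     \<or> (t = (0,-1) \<and> shiftv N v (1,0) \<in> C \<and> v \<notin> C) \<or> (t = (1,0) \<and> shiftv N v (1,1) \<in> C \<and> shiftv N v (1,0) \<notin> C)"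

definition inc :: "vert \<Rightarrow> int \<times> int \<Rightarrow> bool" where
  "inc v t \<longleftrightarrow> (t = (0,1) \<and> v \<in> C \<and> shiftv N v (1,0) \<notin> C) \<or> (t = (-1,0) \<and> shiftv N v (1,0) \<in> C \<and> shiftv N v (1,1) \<notin> C)
     \<or> (t = (0,-1) \<and> shiftv N v (1,1) \<in> C \<and> shiftv N v (0,1) \<notin> C) \<or> (t = (1,0) \<and> shiftv N v (0,1) \<in> C \<and> v \<notin> C)"

lemma out_char: assumes v: "v \<in> torus N"
  shows "e \<in> B \<and> fst e = v \<longleftrightarrow> fst e = v \<and> outc v (snd e)"
proof
  assume a: "e \<in> B \<and> fst e = v"
  then obtain l d where l: "l \<in> C" "d \<in> units" "shiftv N l d \<notin> C" "e = dualedge N l d" using B_elem by blast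
  have lt: "l \<in> torus N" using l C_sub by auto
  have "(d = (0,1) \<and> l = v) \<or> (d = (1,0) \<and> l = shiftv N v (0,1))
     \<or> (d = (-1,0) \<and> l = shiftv N v (1,0)) \<or> (d = (0,-1) \<and> l = shiftv N v (1,1))"
    using fst_dual_iff[OF lt l(2) v] a l(4) by simp
  then show "fst e = v \<and> outc v (snd e)"
    using a l shs sh_zero[OF v] unfolding outc_def
    by (auto simp: dualedge_E dualedge_W dualedge_N dualedge_S)
next
  assume a: "fst e = v \<and> outc v (snd e)"
  have e: "e = (v, snd e)" using a by (cases e) auto
  have t: "shiftv N v (0,1) \<in> torus N" "shiftv N v (1,0) \<in> torus N" "shiftv N v (1,1) \<in> torus N" using shs by auto
  from a consider "snd e = (-1,0)" "v \<in> C" "shiftv N v (0,1) \<notin> C"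
    | "snd e = (0,1)" "shiftv N v (0,1) \<in> C" "shiftv N v (1,1) \<notin> C"
    | "snd e = (0,-1)" "shiftv N v (1,0) \<in> C" "v \<notin> C"
    | "snd e = (1,0)" "shiftv N v (1,1) \<in> C" "shiftv N v (1,0) \<notin> C" unfolding outc_def by blast
  then show "e \<in> B \<and> fst e = v"
  proof cases
    case 1
    have "e = dualedge N v (0,1)" using e 1 sh_zero[OF v] by (simp add: dualedge_N)
    then show ?thesis using dual_in_B[OF v, of "(0,1)"] 1 a by (simp add: units_iff)
  next
    case 2
    have "e = dualedge N (shiftv N v (0,1)) (1,0)" using e 2 sh_zero[OF v] shs by (simp add: dualedge_E)
    moreover have "shiftv N (shiftv N v (0,1)) (1,0) = shiftv N v (1,1)" using shs by simp
    ultimately show ?thesis using dual_in_B[OF t(1), of "(1,0)"] 2 a by (simp add: units_iff)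
  next
    case 3
    have "e = dualedge N (shiftv N v (1,0)) (-1,0)" using e 3 sh_zero[OF v] shs by (simp add: dualedge_W)
    moreover have "shiftv N (shiftv N v (1,0)) (-1,0) = v" using shs sh_zero[OF v] by simp
    ultimately show ?thesis using dual_in_B[OF t(2), of "(-1,0)"] 3 a by (simp add: units_iff)
  next
    case 4
    have "e = dualedge N (shiftv N v (1,1)) (0,-1)" using e 4 sh_zero[OF v] shs by (simp add: dualedge_S)
    moreover have "shiftv N (shiftv N v (1,1)) (0,-1) = shiftv N v (1,0)" using shs by simp
    ultimately show ?thesis using dual_in_B[OF t(3), of "(0,-1)"] 4 a by (simp add: units_iff)
  qed
qed

lemma in_dir: assumes v: "v \<in> torus N" and e: "e \<in> B" "dend N e = v"
  shows "inc v (snd e)"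
proof -
  obtain l d where l: "l \<in> C" "d \<in> units" "shiftv N l d \<notin> C" "e = dualedge N l d" using B_elem e by blast
  have lt: "l \<in> torus N" using l C_sub by auto
  have "(d = (1,0) \<and> l = v) \<or> (d = (0,1) \<and> l = shiftv N v (1,0))
     \<or> (d = (-1,0) \<and> l = shiftv N v (1,1)) \<or> (d = (0,-1) \<and> l = shiftv N v (0,1))"
    using dend_dual_iff[OF lt l(2) v] e l(4) by simp
  then show ?thesis
    using l shs sh_zero[OF v] unfolding inc_def
    by (auto simp: dualedge_E dualedge_W dualedge_N dualedge_S)
qed

lemma dend_torus: "dend N e \<in> torus N" using shs by (simp add: dend_def)

lemma B_fst_dend: assumes "e \<in> B" shows "fst e = shiftv N (dend N e) (- fst (snd e), - snd (snd e))"
proof -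
  have "fst e \<in> torus N" using B_sub assms by auto
  then show ?thesis using sh_eq[OF Npos \<open>fst e \<in> torus N\<close> dend_torus, of "snd e" e] by (simp add: dend_def)
qed

lemma Out_eq: assumes v: "v \<in> torus N"
  shows "{e'\<in>B. fst e' = v} = (\<lambda>t. (v,t)) ` {t. outc v t}"
  using out_char[OF v] by force

lemma outc_set: "{t. outc v t} = (if v \<in> C \<and> \<not> shiftv N v (0,1) \<in> C then {(-1,0)} else {}) \<union> (if shiftv N v (0,1) \<in> C \<and> \<not> shiftv N v (1,1) \<in> C then {(0,1)} else {})
     \<union> (if shiftv N v (1,0) \<in> C \<and> \<not> v \<in> C then {(0,-1)} else {}) \<union> (if shiftv N v (1,1) \<in> C \<and> \<not> shiftv N v (1,0) \<in> C then {(1::int,0::int)} else {})"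
  unfolding outc_def by auto

lemma card_Out: assumes v: "v \<in> torus N" shows "card {e'\<in>B. fst e' = v} = card {t. outc v t}"
  unfolding Out_eq[OF v] by (rule card_image) (auto simp: inj_on_def)

lemma comb1: assumes "inc v t" "card {t. outc v t} \<noteq> 1" shows "outc v (snd t, fst t)"
  using assms unfolding outc_set
  by (cases "v \<in> C"; cases "shiftv N v (1,0) \<in> C"; cases "shiftv N v (0,1) \<in> C"; cases "shiftv N v (1,1) \<in> C";
      auto simp: inc_def outc_def)

lemma comb2: assumes "inc v t" "inc v t'" "card {t. outc v t} = 1" shows "t = t'"
  using assms unfolding outc_set
  by (cases "v \<in> C"; cases "shiftv N v (1,0) \<in> C"; cases "shiftv N v (0,1) \<in> C"; cases "shiftv N v (1,1) \<in> C";
      auto simp: inc_def)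

lemma dsucc_eq: "dsucc N B e = (if card {e'\<in>B. fst e' = dend N e} = 1 then the_elem {e'\<in>B. fst e' = dend N e}
    else (dend N e, (snd (snd e), fst (snd e))))"
  unfolding dsucc_def Let_def ..

lemma dsucc_B: assumes e: "e \<in> B" shows "dsucc N B e \<in> B \<and> fst (dsucc N B e) = dend N e"
proof -
  define v where "v = dend N e"
  have v: "v \<in> torus N" using dend_torus v_def by simp
  show ?thesis
  proof (cases "card {e'\<in>B. fst e' = v} = 1")
    case True
    then obtain a where a: "{e'\<in>B. fst e' = v} = {a}" using card_1_singletonE by blast
    have "dsucc N B e = a" using dsucc_eq[of e] True a unfolding v_def[symmetric] by simp
    moreover have "a \<in> B" "fst a = v" using a by auto
    ultimately show ?thesis unfolding v_def by simp
  next
    case False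
    then have "card {t. outc v t} \<noteq> 1" using card_Out[OF v] by simp
    then have "outc v (snd (snd e), fst (snd e))" using comb1 in_dir[OF v e v_def[symmetric]] by blast
    then have "(v, (snd (snd e), fst (snd e))) \<in> B" using out_char[OF v, of "(v, (snd (snd e), fst (snd e)))"] by simp
    moreover have "dsucc N B e = (v, (snd (snd e), fst (snd e)))" using dsucc_eq[of e] False unfolding v_def[symmetric] by simp
    ultimately show ?thesis unfolding v_def by simp
  qed
qed

lemma dsucc_inj: "inj_on (dsucc N B) B"
proof
  fix e e' assume e: "e \<in> B" and e': "e' \<in> B" and eq: "dsucc N B e = dsucc N B e'"
  have de: "dend N e = dend N e'" using dsucc_B[OF e] dsucc_B[OF e'] eq by simp
  define v where "v = dend N e"
  have v: "v \<in> torus N" using dend_torus v_def by simp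
  have de': "dend N e' = v" using de v_def by simp
  have sd: "snd e = snd e'"
  proof (cases "card {e'\<in>B. fst e' = v} = 1")
    case True
    then have "card {t. outc v t} = 1" using card_Out[OF v] by simp
    then show ?thesis using comb2 in_dir[OF v e v_def[symmetric]] in_dir[OF v e' de'] by blast
  next
    case False
    have "dsucc N B e = (v, (snd (snd e), fst (snd e)))" using dsucc_eq[of e] False unfolding v_def[symmetric] by simp
    moreover have "dsucc N B e' = (v, (snd (snd e'), fst (snd e')))" using dsucc_eq[of e'] False de' by simp
    ultimately show ?thesis using eq by (simp add: prod_eq_iff)
  qed
  then show "e = e'" using B_fst_dend[OF e] B_fst_dend[OF e'] de by (simp add: prod_eq_iff)
qed

end

definition orb :: "('a \<Rightarrow> 'a) \<Rightarrow> 'a \<Rightarrow> 'a set" where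
  "orb f e = {(f ^^ n) e | n. True}"

lemma funpow_in: "f ` S \<subseteq> S \<Longrightarrow> e \<in> S \<Longrightarrow> (f ^^ n) e \<in> S"
  by (induction n) auto

lemma funpow_cancel: assumes "f ` S \<subseteq> S" "inj_on f S" "a \<in> S" "b \<in> S" "(f ^^ m) a = (f ^^ m) b"
  shows "a = b"
  using assms(5)
proof (induction m)
  case 0 then show ?case by simp
next
  case (Suc m)
  have "(f ^^ m) a = (f ^^ m) b"
  proof -
    have "f ((f ^^ m) a) = f ((f ^^ m) b)" using Suc.prems by simp
    moreover have "(f ^^ m) a \<in> S" "(f ^^ m) b \<in> S" using funpow_in[OF assms(1)] assms(3,4) by auto
    ultimately show ?thesis using inj_onD[OF assms(2)] by blast
  qed
  then show ?case using Suc.IH by simp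
qed

lemma perm_period: assumes "finite S" "f ` S \<subseteq> S" "inj_on f S" "e \<in> S"
  shows "\<exists>p>0. (f ^^ p) e = e"
proof -
  have "\<not> inj (\<lambda>n::nat. (f ^^ n) e)"
  proof
    assume "inj (\<lambda>n::nat. (f ^^ n) e)"
    then have "infinite (range (\<lambda>n::nat. (f ^^ n) e))" using finite_imageD infinite_UNIV_nat by blast
    moreover have "range (\<lambda>n::nat. (f ^^ n) e) \<subseteq> S" using funpow_in[OF assms(2,4)] by auto
    ultimately show False using assms(1) finite_subset by blast
  qed
  then obtain m n :: nat where mn: "m \<noteq> n" "(f ^^ m) e = (f ^^ n) e" by (auto simp: inj_def)
  have "\<exists>m n::nat. m < n \<and> (f ^^ m) e = (f ^^ n) e"
  proof (cases "m < n")
    case True then show ?thesis using mn by blast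
  next
    case False then have "n < m" using mn(1) by simp
    then show ?thesis using mn(2) by (intro exI[of _ n] exI[of _ m]) simp
  qed
  then obtain m n :: nat where mn: "m < n" "(f ^^ m) e = (f ^^ n) e" by blast
  obtain k where k: "n = m + k" using mn(1) less_imp_add_positive by blast
  have "(f ^^ m) e = (f ^^ m) ((f ^^ (n - m)) e)" using mn(2) k by (simp add: funpow_add)
  then have "e = (f ^^ (n - m)) e" using funpow_cancel[OF assms(2,3,4) funpow_in[OF assms(2,4)]] by blast
  then show ?thesis using mn(1) by (intro exI[of _ "n - m"]) auto
qed

lemma funpow_mult_period: "(f ^^ p) e = e \<Longrightarrow> (f ^^ (k * p)) e = e"
  by (induction k) (auto simp: funpow_add)

lemma orb_back: assumes "finite S" "f ` S \<subseteq> S" "inj_on f S" "e \<in> S"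
  shows "e \<in> orb f ((f ^^ n) e)"
proof -
  obtain p where p: "p > 0" "(f ^^ p) e = e" using perm_period[OF assms] by blast
  have "(f ^^ (n * p)) e = e" using funpow_mult_period[OF p(2)] by simp
  moreover have "n * p = (n * p - n) + n" using p(1) by (simp add: le_add_diff_inverse2)
  moreover have "(f ^^ (n * p - n)) ((f ^^ n) e) = (f ^^ (n * p - n + n)) e" by (simp only: funpow_add comp_apply)
  ultimately have "(f ^^ (n * p - n)) ((f ^^ n) e) = e" by simp
  then show ?thesis unfolding orb_def by (intro CollectI exI[of _ "n * p - n"]) simp
qed

lemma orb_sub: assumes "f ` S \<subseteq> S" "e \<in> S" shows "orb f e \<subseteq> S"
proof
  fix y assume "y \<in> orb f e"
  then show "y \<in> S" using assms unfolding orb_def using funpow_in[of f S e] by auto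
qed

lemma orb_self: "e \<in> orb f e" unfolding orb_def by (intro CollectI exI[of _ 0]) simp

lemma orb_closed: "f ` orb f e \<subseteq> orb f e"
proof
  fix y assume "y \<in> f ` orb f e"
  then obtain n where "y = f ((f ^^ n) e)" unfolding orb_def by blast
  then have "y = (f ^^ Suc n) e" by simp
  then show "y \<in> orb f e" unfolding orb_def by blast
qed

lemma orb_mono: "a \<in> orb f e \<Longrightarrow> orb f a \<subseteq> orb f e"
proof
  fix y assume "a \<in> orb f e" "y \<in> orb f a"
  then obtain n m where "a = (f ^^ n) e" "y = (f ^^ m) a" unfolding orb_def by blast
  then have "y = (f ^^ (m + n)) e" by (simp add: funpow_add)
  then show "y \<in> orb f e" unfolding orb_def by blast
qed

lemma orb_eq: assumes "finite S" "f ` S \<subseteq> S" "inj_on f S" "e \<in> S" "a \<in> orb f e"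
  shows "orb f a = orb f e"
proof
  show "orb f a \<subseteq> orb f e" using orb_mono[OF assms(5)] .
  obtain n where "a = (f ^^ n) e" using assms(5) unfolding orb_def by blast
  then have "e \<in> orb f a" using orb_back[OF assms(1-4)] by simp
  then show "orb f e \<subseteq> orb f a" by (rule orb_mono)
qed

lemma orb_disj: assumes "finite S" "f ` S \<subseteq> S" "inj_on f S" "a \<in> S" "b \<in> S"
  "orb f a \<noteq> orb f b" shows "orb f a \<inter> orb f b = {}"
proof (rule ccontr)
  assume "orb f a \<inter> orb f b \<noteq> {}"
  then obtain y where "y \<in> orb f a" "y \<in> orb f b" by blast
  then have "orb f y = orb f a" "orb f y = orb f b" using orb_eq[OF assms(1-3) assms(4), of y] orb_eq[OF assms(1-3) assms(5), of y] by simp_all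
  then show False using assms(6) by simp
qed

lemma balance_generic: assumes "finite G" "inj_on f G" "f ` G \<subseteq> G" "\<And>e. e \<in> G \<Longrightarrow> s (f e) = h e"
  shows "card {e\<in>G. h e = v} = card {e\<in>G. s e = v}"
proof -
  have fG: "f ` G = G" using assms(1-3) by (simp add: endo_inj_surj)
  have "bij_betw f {e\<in>G. h e = v} {e\<in>G. s e = v}"
  proof (rule bij_betw_imageI)
    show "inj_on f {e \<in> G. h e = v}" using assms(2) by (rule inj_on_subset) auto
    show "f ` {e \<in> G. h e = v} = {e \<in> G. s e = v}"
    proof
      show "f ` {e \<in> G. h e = v} \<subseteq> {e \<in> G. s e = v}" using assms(3,4) by auto
      show "{e \<in> G. s e = v} \<subseteq> f ` {e \<in> G. h e = v}"
      proof
        fix y assume y: "y \<in> {e \<in> G. s e = v}"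
        then obtain e where "e \<in> G" "y = f e" using fG by blast
        then show "y \<in> f ` {e \<in> G. h e = v}" using y assms(4) by auto
      qed
    qed
  qed
  then show ?thesis by (rule bij_betw_same_card)
qed


lemma sh_nat: "shiftv N (a,b) (int c, int d) = ((a + c) mod N, (b + d) mod N)"
  unfolding shiftv_def by (simp add: of_nat_mod[symmetric] del: of_nat_add add: of_nat_add[symmetric])

lemma sh_E: "b < N \<Longrightarrow> shiftv N (a,b) (1,0) = (Suc a mod N, b)"
  using sh_nat[of N a b 1 0] by simp
lemma sh_Nn: "a < N \<Longrightarrow> shiftv N (a,b) (0,1) = (a, Suc b mod N)"
  using sh_nat[of N a b 0 1] by simp

locale flux = cfg + fixes G assumes G_B: "G \<subseteq> B" and G_cl: "dsucc N B ` G \<subseteq> G"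
begin

definition ind :: "vert \<Rightarrow> int \<times> int \<Rightarrow> int" where
  "ind l d = (if dualedge N l d \<in> G then 1 else 0)"

definition phi :: "vert \<Rightarrow> int \<times> int \<Rightarrow> int" where
  "phi l d = ind l d - ind (shiftv N l d) (- fst d, - snd d)"

lemma finite_G: "finite G" using finite_B G_B finite_subset by blast

lemma card_four: assumes "distinct [a,b,c,d]"
  shows "card {e\<in>G. e \<in> {a,b,c,d}} = of_bool (a \<in> G) + of_bool (b \<in> G) + of_bool (c \<in> G) + of_bool (d \<in> G)"
proof -
  have "{e\<in>G. e \<in> {a,b,c,d}} = {e\<in>{a,b,c,d}. e \<in> G}" by blast
  then have "card {e\<in>G. e \<in> {a,b,c,d}} = (\<Sum>e\<in>{e\<in>{a,b,c,d}. e \<in> G}. 1)" by simp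
  also have "\<dots> = (\<Sum>e\<in>{a,b,c,d}. if e \<in> G then 1 else 0)" by (rule sum.inter_filter) simp
  also have "\<dots> = of_bool (a \<in> G) + of_bool (b \<in> G) + of_bool (c \<in> G) + of_bool (d \<in> G)"
    using assms by (simp add: add.assoc)
  finally show ?thesis .
qed

lemma balance_card: "card {e\<in>G. dend N e = v} = card {e\<in>G. fst e = v}"
  by (rule balance_generic[OF finite_G inj_on_subset[OF dsucc_inj G_B] G_cl]) (use dsucc_B G_B in blast)

lemma out_set: assumes v: "v \<in> torus N"
  shows "{e\<in>G. fst e = v} = {e\<in>G. e \<in> {dualedge N v (0,1), dualedge N (shiftv N v (0,1)) (1,0),
      dualedge N (shiftv N v (1,0)) (-1,0), dualedge N (shiftv N v (1,1)) (0,-1)}}"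
proof -
  have "dualedge N v (0,1) = (v, (-1,0))" using sh_zero[OF v] by (simp add: dualedge_N)
  moreover have "dualedge N (shiftv N v (0,1)) (1,0) = (v, (0,1))" using sh_zero[OF v] by (simp add: dualedge_E)
  moreover have "dualedge N (shiftv N v (1,0)) (-1,0) = (v, (0,-1))" using sh_zero[OF v] by (simp add: dualedge_W)
  moreover have "dualedge N (shiftv N v (1,1)) (0,-1) = (v, (1,0))" using sh_zero[OF v] by (simp add: dualedge_S)
  moreover have "e \<in> G \<Longrightarrow> fst e = v \<Longrightarrow> e \<in> {(v, (-1,0)), (v,(0,1)), (v,(0,-1)), (v,(1,0))}" for e
  proof -
    assume "e \<in> G" "fst e = v"
    then have "outc v (snd e)" using out_char[OF v, of e] G_B by auto
    then show ?thesis using \<open>fst e = v\<close> unfolding outc_def by (cases e) auto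
  qed
  ultimately show ?thesis by auto
qed

lemma in_set: assumes v: "v \<in> torus N"
  shows "{e\<in>G. dend N e = v} = {e\<in>G. e \<in> {dualedge N v (1,0), dualedge N (shiftv N v (1,0)) (0,1),
      dualedge N (shiftv N v (1,1)) (-1,0), dualedge N (shiftv N v (0,1)) (0,-1)}}"
proof -
  have "e \<in> G \<Longrightarrow> dend N e = v \<Longrightarrow> e \<in> {dualedge N v (1,0), dualedge N (shiftv N v (1,0)) (0,1),
      dualedge N (shiftv N v (1,1)) (-1,0), dualedge N (shiftv N v (0,1)) (0,-1)}" for e
  proof -
    assume e: "e \<in> G" "dend N e = v"
    then obtain l d where l: "l \<in> C" "d \<in> units" "e = dualedge N l d" using B_elem G_B by blast
    have lt: "l \<in> torus N" using l C_sub by auto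
    have "(d = (1,0) \<and> l = v) \<or> (d = (0,1) \<and> l = shiftv N v (1,0))
     \<or> (d = (-1,0) \<and> l = shiftv N v (1,1)) \<or> (d = (0,-1) \<and> l = shiftv N v (0,1))"
      using dend_dual_iff[OF lt l(2) v] e l(3) by simp
    then show ?thesis using l(3) by auto
  qed
  moreover have "x \<in> {dualedge N v (1,0), dualedge N (shiftv N v (1,0)) (0,1),
      dualedge N (shiftv N v (1,1)) (-1,0), dualedge N (shiftv N v (0,1)) (0,-1)} \<Longrightarrow> dend N x = v" for x
    using sh_zero[OF v] by (auto simp: dend_def dualedge_E dualedge_W dualedge_N dualedge_S)
  ultimately show ?thesis by (simp only: set_eq_iff mem_Collect_eq) blast
qed

lemma balance_ind: assumes v: "v \<in> torus N"
  shows "ind v (1,0) + ind (shiftv N v (1,0)) (0,1) + ind (shiftv N v (1,1)) (-1,0) + ind (shiftv N v (0,1)) (0,-1)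
       = ind v (0,1) + ind (shiftv N v (0,1)) (1,0) + ind (shiftv N v (1,0)) (-1,0) + ind (shiftv N v (1,1)) (0,-1)"
proof -
  have d1: "distinct [dualedge N v (1,0), dualedge N (shiftv N v (1,0)) (0,1),
      dualedge N (shiftv N v (1,1)) (-1,0), dualedge N (shiftv N v (0,1)) (0,-1)]"
    by (simp add: dualedge_E dualedge_W dualedge_N dualedge_S)
  have d2: "distinct [dualedge N v (0,1), dualedge N (shiftv N v (0,1)) (1,0),
      dualedge N (shiftv N v (1,0)) (-1,0), dualedge N (shiftv N v (1,1)) (0,-1)]"
    by (simp add: dualedge_E dualedge_W dualedge_N dualedge_S)
  have "card {e\<in>G. dend N e = v} = card {e\<in>G. fst e = v}" using balance_card by simp
  then have "int (card {e\<in>G. dend N e = v}) = int (card {e\<in>G. fst e = v})" by simp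
  then show ?thesis unfolding in_set[OF v] out_set[OF v] card_four[OF d1] card_four[OF d2] ind_def
    by (simp only: of_nat_add of_nat_of_bool) (simp add: of_bool_def)
qed

lemma closed: assumes v: "v \<in> torus N"
  shows "phi v (1,0) + phi (shiftv N v (1,0)) (0,1) = phi v (0,1) + phi (shiftv N v (0,1)) (1,0)"
  using balance_ind[OF v] sh_zero[OF v] unfolding phi_def by simp


lemma sum_G: "(\<Sum>e\<in>G. Fn e) = (\<Sum>l\<in>torus N. \<Sum>d\<in>units. if dualedge N l d \<in> G then Fn (dualedge N l d) else 0)"
proof -
  define P where "P = {p \<in> torus N \<times> units. dualedge N (fst p) (snd p) \<in> G}"
  have GP: "G = (\<lambda>p. dualedge N (fst p) (snd p)) ` P"
  proof
    show "G \<subseteq> (\<lambda>p. dualedge N (fst p) (snd p)) ` P"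
    proof
      fix e assume e: "e \<in> G"
      then obtain l d where l: "l \<in> C" "d \<in> units" "e = dualedge N l d" using B_elem G_B by blast
      then have "(l,d) \<in> P" using e C_sub unfolding P_def by auto
      then show "e \<in> (\<lambda>p. dualedge N (fst p) (snd p)) ` P" using l(3) by force
    qed
  qed (auto simp: P_def)
  have inj: "inj_on (\<lambda>p. dualedge N (fst p) (snd p)) P"
  proof (rule inj_onI)
    fix p q assume "p \<in> P" "q \<in> P" "dualedge N (fst p) (snd p) = dualedge N (fst q) (snd q)"
    then have "fst p = fst q \<and> snd p = snd q" using dualedge_inj[of "fst p" "fst q" "snd p" "snd q"] unfolding P_def by auto
    then show "p = q" by (simp add: prod_eq_iff)
  qed
  have "(\<Sum>e\<in>G. Fn e) = (\<Sum>p\<in>P. Fn (dualedge N (fst p) (snd p)))"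
    unfolding GP by (simp add: sum.reindex[OF inj])
  also have "\<dots> = (\<Sum>p\<in>torus N \<times> units. if dualedge N (fst p) (snd p) \<in> G then Fn (dualedge N (fst p) (snd p)) else 0)"
    unfolding P_def by (rule sum.inter_filter) (simp add: finite_torus finite_units)
  also have "\<dots> = (\<Sum>l\<in>torus N. \<Sum>d\<in>units. if dualedge N l d \<in> G then Fn (dualedge N l d) else 0)"
    by (simp only: sum.cartesian_product split_beta')
  finally show ?thesis .
qed

lemma sum_units: "(\<Sum>d\<in>units. f d) = f (1,0) + f (-1,0) + f (0,1) + f (0,-1)"
  by (simp add: units_def add.assoc)

lemma bij_sh: "bij_betw (\<lambda>l. shiftv N l d) (torus N) (torus N)"
proof (rule bij_betw_imageI)
  show "inj_on (\<lambda>l. shiftv N l d) (torus N)" by (rule inj_onI) (use sh_inj[OF Npos] in blast)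
  show "(\<lambda>l. shiftv N l d) ` torus N = torus N"
  proof
    show "(\<lambda>l. shiftv N l d) ` torus N \<subseteq> torus N" using sh_torus[OF Npos] by blast
    show "torus N \<subseteq> (\<lambda>l. shiftv N l d) ` torus N"
    proof
      fix w assume w: "w \<in> torus N"
      have "shiftv N (shiftv N w (- fst d, - snd d)) d = w" using shs(1) sh_zero[OF w] by simp
      then show "w \<in> (\<lambda>l. shiftv N l d) ` torus N" using sh_torus[OF Npos] by (metis imageI)
    qed
  qed
qed

lemma sum_sh: "(\<Sum>l\<in>torus N. f (shiftv N l d)) = (\<Sum>l\<in>torus N. f l)"
  using sum.reindex_bij_betw[OF bij_sh, of f] .

lemma dualedge_snd: "snd (dualedge N l d) = (- snd d, fst d)" by (simp add: dualedge_def)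

lemma sum_snd2: "(\<Sum>e\<in>G. snd (snd e)) = (\<Sum>l\<in>torus N. phi l (1,0))"
proof -
  have "(\<Sum>e\<in>G. snd (snd e)) = (\<Sum>l\<in>torus N. ind l (1,0) - ind l (-1,0))"
    unfolding sum_G sum_units dualedge_snd by (simp add: ind_def cong: if_cong, intro sum.cong refl, simp)
  also have "\<dots> = (\<Sum>l\<in>torus N. ind l (1,0)) - (\<Sum>l\<in>torus N. ind (shiftv N l (1,0)) (-1,0))"
    using sum_sh[of "\<lambda>l. ind l (-1,0)" "(1,0)"] by (simp add: sum_subtractf)
  also have "\<dots> = (\<Sum>l\<in>torus N. phi l (1,0))" by (simp add: phi_def sum_subtractf)
  finally show ?thesis .
qed

lemma sum_snd1: "(\<Sum>e\<in>G. fst (snd e)) = - (\<Sum>l\<in>torus N. phi l (0,1))"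
proof -
  have "(\<Sum>e\<in>G. fst (snd e)) = (\<Sum>l\<in>torus N. ind l (0,-1) - ind l (0,1))"
    unfolding sum_G sum_units dualedge_snd by (simp add: ind_def cong: if_cong, intro sum.cong refl, simp)
  also have "\<dots> = (\<Sum>l\<in>torus N. ind (shiftv N l (0,1)) (0,-1)) - (\<Sum>l\<in>torus N. ind l (0,1))"
    using sum_sh[of "\<lambda>l. ind l (0,-1)" "(0,1)"] by (simp add: sum_subtractf)
  also have "\<dots> = - (\<Sum>l\<in>torus N. phi l (0,1))" by (simp add: phi_def sum_subtractf)
  finally show ?thesis .
qed

lemma sum_torus: "(\<Sum>l\<in>torus N. f l) = (\<Sum>b<N. \<Sum>a<N. f (a,b))"
proof -
  have "(\<Sum>l\<in>torus N. f l) = (\<Sum>a<N. \<Sum>b<N. f (a,b))"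
    unfolding torus_def lessThan_atLeast0 by (simp only: sum.cartesian_product split_beta' fst_conv snd_conv prod.collapse)
  also have "\<dots> = (\<Sum>b<N. \<Sum>a<N. f (a,b))" by (rule sum.swap)
  finally show ?thesis .
qed

lemma bij_suc_mod: "bij_betw (\<lambda>a. Suc a mod N) {..<N} {..<N}"
proof -
  have "(\<lambda>a. Suc a mod N) = (\<lambda>a. fst (shiftv N (a,0) (1,0)))" using sh_E[OF Npos] by auto
  moreover have "bij_betw (\<lambda>a. fst (shiftv N (a,0) (1,0))) {..<N} {..<N}"
  proof (rule bij_betw_imageI)
    show "inj_on (\<lambda>a. fst (shiftv N (a, 0) (1, 0))) {..<N}"
    proof (rule inj_onI)
      fix a a' assume "a \<in> {..<N}" "a' \<in> {..<N}" "fst (shiftv N (a, 0) (1, 0)) = fst (shiftv N (a', 0) (1, 0))"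
      then have "shiftv N (a, 0) (1, 0) = shiftv N (a', 0) (1, 0)" using sh_E[OF Npos] by simp
      then show "a = a'" using sh_inj[OF Npos, of "(a,0)" "(a',0)"] \<open>a \<in> _\<close> \<open>a' \<in> _\<close> Npos by (simp add: torus_def)
    qed
    show "(\<lambda>a. fst (shiftv N (a, 0) (1, 0))) ` {..<N} = {..<N}"
    proof
      show "(\<lambda>a. fst (shiftv N (a, 0) (1, 0))) ` {..<N} \<subseteq> {..<N}" using sh_E[OF Npos] Npos by auto
      show "{..<N} \<subseteq> (\<lambda>a. fst (shiftv N (a, 0) (1, 0))) ` {..<N}"
      proof
        fix a assume a: "a \<in> {..<N}"
        have "a = fst (shiftv N (shiftv N (a,0) (-1,0)) (1,0))" using sh_zero[of "(a,0)" N] a Npos by (simp add: torus_def)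
        moreover have "fst (shiftv N (a,0) (-1,0)) < N" "snd (shiftv N (a,0) (-1,0)) = 0"
          using sh_torus[OF Npos, of "(a,0)" "(-1,0)"] by (auto simp: torus_def shiftv_def)
        ultimately have "a = fst (shiftv N (fst (shiftv N (a,0) (-1,0)), 0) (1,0))"
          by (metis prod.collapse)
        then show "a \<in> (\<lambda>a. fst (shiftv N (a, 0) (1, 0))) ` {..<N}"
          using \<open>fst (shiftv N (a,0) (-1,0)) < N\<close> by (intro rev_image_eqI[of "fst (shiftv N (a,0) (-1,0))"]) auto
      qed
    qed
  qed
  ultimately show ?thesis by simp
qed

lemma sum_suc_mod: "(\<Sum>a<N. f (Suc a mod N)) = (\<Sum>a<N. f a)"
  using sum.reindex_bij_betw[OF bij_suc_mod, of f] .

end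

context flux begin

definition R where "R b = (\<Sum>a<N. phi (a,b) (1,0))"
definition Cc where "Cc a = (\<Sum>b<N. phi (a,b) (0,1))"

lemma closed_nat: assumes "a < N" "b < N"
  shows "phi (a,b) (1,0) + phi (Suc a mod N, b) (0,1) = phi (a,b) (0,1) + phi (a, Suc b mod N) (1,0)"
  using closed[of "(a,b)"] sh_E[OF assms(2)] sh_Nn[OF assms(1)] assms by (simp add: torus_def)

lemma R_step: assumes "Suc b < N" shows "R (Suc b) = R b"
proof -
  have "(\<Sum>a<N. phi (a,b) (1,0) + phi (Suc a mod N, b) (0,1)) = (\<Sum>a<N. phi (a,b) (0,1) + phi (a, Suc b mod N) (1,0))"
    by (rule sum.cong) (use closed_nat assms in auto)
  then show ?thesis using sum_suc_mod[of "\<lambda>a. phi (a,b) (0,1)"] assms by (simp add: sum.distrib R_def)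
qed

lemma R_const: "b < N \<Longrightarrow> R b = R 0"
proof (induction b)
  case (Suc b) then show ?case using R_step[of b] by simp
qed simp

lemma Cc_step: assumes "Suc a < N" shows "Cc (Suc a) = Cc a"
proof -
  have "(\<Sum>b<N. phi (a,b) (1,0) + phi (Suc a mod N, b) (0,1)) = (\<Sum>b<N. phi (a,b) (0,1) + phi (a, Suc b mod N) (1,0))"
  proof (rule sum.cong)
    fix x assume "x \<in> {..<N}"
    then show "phi (a,x) (1,0) + phi (Suc a mod N, x) (0,1) = phi (a,x) (0,1) + phi (a, Suc x mod N) (1,0)"
      using closed_nat[of a x] assms by simp
  qed simp
  then show ?thesis using sum_suc_mod[of "\<lambda>b. phi (a,b) (1,0)"] assms by (simp add: sum.distrib Cc_def)
qed

lemma Cc_const: "a < N \<Longrightarrow> Cc a = Cc 0"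
proof (induction a)
  case (Suc a) then show ?case using Cc_step[of a] by simp
qed simp

lemma periods: assumes "(\<Sum>e\<in>G. snd e) = (0,0)" shows "R 0 = 0" "Cc 0 = 0"
proof -
  have "(\<Sum>e\<in>G. snd (snd e)) = 0" using arg_cong[OF assms, of snd] by (simp add: snd_sum)
  then have "(\<Sum>b<N. R b) = 0" unfolding sum_snd2 sum_torus R_def .
  moreover have "(\<Sum>b<N. R b) = (\<Sum>b<N. R 0)" by (intro sum.cong refl R_const) simp
  ultimately have "of_nat N * R 0 = 0" by simp
  then show "R 0 = 0" using Npos by simp
  have "(\<Sum>e\<in>G. fst (snd e)) = 0" using arg_cong[OF assms, of fst] by (simp add: fst_sum)
  then have "(\<Sum>b<N. \<Sum>a<N. phi (a,b) (0,1)) = 0" unfolding sum_snd1 sum_torus by simp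
  then have "(\<Sum>a<N. Cc a) = 0" unfolding Cc_def by (subst sum.swap) 
  moreover have "(\<Sum>a<N. Cc a) = (\<Sum>a<N. Cc 0)" by (intro sum.cong refl Cc_const) simp
  ultimately have "of_nat N * Cc 0 = 0" by simp
  then show "Cc 0 = 0" using Npos by simp
qed

definition w :: "vert \<Rightarrow> int" where
  "w l = (\<Sum>s<fst l. phi (s,0) (1,0)) + (\<Sum>t<snd l. phi (fst l, t) (0,1))"

lemma V_step: assumes "a < N" "b < N"
  shows "(\<Sum>t<b. phi (Suc a mod N, t) (0,1)) - (\<Sum>t<b. phi (a,t) (0,1)) = phi (a,b) (1,0) - phi (a,0) (1,0)"
  using assms(2)
proof (induction b)
  case 0 then show ?case by simp
next
  case (Suc b)
  then have "b < N" by simp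
  have c: "phi (a,b) (1,0) + phi (Suc a mod N, b) (0,1) = phi (a,b) (0,1) + phi (a, Suc b) (1,0)"
    using closed_nat[OF assms(1) \<open>b < N\<close>] Suc.prems by simp
  show ?case using Suc.IH[OF \<open>b < N\<close>] c by simp
qed





lemma w_E: assumes l: "l \<in> torus N" and Rz: "R 0 = 0" shows "w (shiftv N l (1,0)) = w l + phi l (1,0)"
proof -
  obtain a b where ab: "l = (a,b)" "a < N" "b < N" using l by (cases l) (auto simp: torus_def)
  have sh: "shiftv N l (1,0) = (Suc a mod N, b)" using sh_E[OF ab(3)] ab(1) by simp
  have V: "(\<Sum>t<b. phi (Suc a mod N, t) (0,1)) = (\<Sum>t<b. phi (a,t) (0,1)) + phi (a,b) (1,0) - phi (a,0) (1,0)"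
    using V_step[OF ab(2,3)] by simp
  show ?thesis
  proof (cases "Suc a < N")
    case True
    then show ?thesis unfolding w_def sh using V ab(1) by simp
  next
    case False
    then have aN: "Suc a = N" using ab(2) by simp
    have "(\<Sum>s<Suc a. phi (s,0) (1,0)) = R 0" unfolding R_def aN ..
    then have "(\<Sum>s<a. phi (s,0) (1,0)) + phi (a,0) (1,0) = 0" using Rz by simp
    then show ?thesis unfolding w_def sh using V aN ab(1) by simp
  qed
qed

lemma w_N: assumes l: "l \<in> torus N" and Cz: "Cc 0 = 0" shows "w (shiftv N l (0,1)) = w l + phi l (0,1)"
proof -
  obtain a b where ab: "l = (a,b)" "a < N" "b < N" using l by (cases l) (auto simp: torus_def)
  have sh: "shiftv N l (0,1) = (a, Suc b mod N)" using sh_Nn[OF ab(2)] ab(1) by simp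
  show ?thesis
  proof (cases "Suc b < N")
    case True
    then show ?thesis unfolding w_def sh using ab(1) by simp
  next
    case False
    then have bN: "Suc b = N" using ab(3) by simp
    have "(\<Sum>t<Suc b. phi (a,t) (0,1)) = Cc a" unfolding Cc_def bN ..
    then have "(\<Sum>t<b. phi (a,t) (0,1)) + phi (a,b) (0,1) = 0" using Cz Cc_const[OF ab(2)] by simp
    then show ?thesis unfolding w_def sh using bN ab(1) by simp
  qed
qed

lemma w_all: assumes l: "l \<in> torus N" and d: "d \<in> units" and Rz: "R 0 = 0" and Cz: "Cc 0 = 0"
  shows "w (shiftv N l d) = w l + phi l d"
proof -
  have back1: "shiftv N (shiftv N l (-1,0)) (1,0) = l" using sh_zero[OF l] by simp
  have back2: "shiftv N (shiftv N l (0,-1)) (0,1) = l" using sh_zero[OF l] by simp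
  have mt: "shiftv N l (-1,0) \<in> torus N" "shiftv N l (0,-1) \<in> torus N" using shs by auto
  consider "d = (1,0)" | "d = (-1,0)" | "d = (0,1)" | "d = (0,-1)" using d by (auto simp: units_iff)
  then show ?thesis
  proof cases
    case 1 then show ?thesis using w_E[OF l Rz] by simp
  next
    case 2
    have "w l = w (shiftv N l (-1,0)) + phi (shiftv N l (-1,0)) (1,0)" using w_E[OF mt(1) Rz] back1 by simp
    moreover have "phi (shiftv N l (-1,0)) (1,0) = - phi l (-1,0)" unfolding phi_def using back1 by simp
    ultimately show ?thesis using 2 by simp
  next
    case 3 then show ?thesis using w_N[OF l Cz] by simp
  next
    case 4
    have "w l = w (shiftv N l (0,-1)) + phi (shiftv N l (0,-1)) (0,1)" using w_N[OF mt(2) Cz] back2 by simp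
    moreover have "phi (shiftv N l (0,-1)) (0,1) = - phi l (0,-1)" unfolding phi_def using back2 by simp
    ultimately show ?thesis using 4 by simp
  qed
qed

end

context cfg begin

lemma B_flux: "flux N x i B"
  by unfold_locales (use dsucc_B in auto)

lemma sum_B_snd: "(\<Sum>e\<in>B. snd e) = (0,0)"
proof -
  interpret fB: flux N x i B by (rule B_flux)
  have indE: "fB.ind l (1,0) - fB.ind (shiftv N l (1,0)) (-1,0) = of_bool (l \<in> C) - of_bool (shiftv N l (1,0) \<in> C)"
    if l: "l \<in> torus N" for l
  proof -
    have b: "shiftv N (shiftv N l (1,0)) (-1,0) = l" using sh_zero[OF l] by simp
    have m: "shiftv N l (1,0) \<in> torus N" by (rule sh_torus[OF Npos])
    have A: "dualedge N l (1,0) \<in> B \<longleftrightarrow> l \<in> C \<and> shiftv N l (1,0) \<notin> C" using dual_in_B[OF l, of "(1,0)"] by (simp add: units_iff)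
    have Bq: "dualedge N (shiftv N l (1,0)) (-1,0) \<in> B \<longleftrightarrow> shiftv N l (1,0) \<in> C \<and> l \<notin> C"
      using dual_in_B[OF m, of "(-1,0)"] b by (simp add: units_iff)
    show ?thesis unfolding fB.ind_def A Bq by (cases "l \<in> C"; cases "shiftv N l (1,0) \<in> C") simp_all
  qed
  have indN: "fB.ind l (0,1) - fB.ind (shiftv N l (0,1)) (0,-1) = of_bool (l \<in> C) - of_bool (shiftv N l (0,1) \<in> C)"
    if l: "l \<in> torus N" for l
  proof -
    have b: "shiftv N (shiftv N l (0,1)) (0,-1) = l" using sh_zero[OF l] by simp
    have m: "shiftv N l (0,1) \<in> torus N" by (rule sh_torus[OF Npos])
    have A: "dualedge N l (0,1) \<in> B \<longleftrightarrow> l \<in> C \<and> shiftv N l (0,1) \<notin> C" using dual_in_B[OF l, of "(0,1)"] by (simp add: units_iff)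
    have Bq: "dualedge N (shiftv N l (0,1)) (0,-1) \<in> B \<longleftrightarrow> shiftv N l (0,1) \<in> C \<and> l \<notin> C"
      using dual_in_B[OF m, of "(0,-1)"] b by (simp add: units_iff)
    show ?thesis unfolding fB.ind_def A Bq by (cases "l \<in> C"; cases "shiftv N l (0,1) \<in> C") simp_all
  qed
  have "(\<Sum>e\<in>B. snd (snd e)) = (\<Sum>l\<in>torus N. of_bool (l \<in> C) - of_bool (shiftv N l (1,0) \<in> C))"
    unfolding fB.sum_snd2 by (rule sum.cong) (simp_all add: fB.phi_def indE)
  also have "\<dots> = 0" using fB.sum_sh[of "\<lambda>l. of_bool (l \<in> C) :: int" "(1,0)"] by (simp add: sum_subtractf)
  finally have 2: "(\<Sum>e\<in>B. snd (snd e)) = 0" .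
  have "(\<Sum>e\<in>B. fst (snd e)) = - (\<Sum>l\<in>torus N. of_bool (l \<in> C) - of_bool (shiftv N l (0,1) \<in> C))"
    unfolding fB.sum_snd1 by (simp add: fB.phi_def indN)
  also have "\<dots> = 0" using fB.sum_sh[of "\<lambda>l. of_bool (l \<in> C) :: int" "(0,1)"] by (simp add: sum_subtractf)
  finally have 1: "(\<Sum>e\<in>B. fst (snd e)) = 0" .
  show ?thesis using 1 2 by (simp add: prod_eq_iff fst_sum snd_sum)
qed

abbreviation "Cs \<equiv> contours N B"

lemma Cs_orb: "Cs = {orb (dsucc N B) e | e. e \<in> B}"
  unfolding contours_def orb_def ..

lemmas dsB = dsucc_B

lemma dsucc_img: "dsucc N B ` B \<subseteq> B" using dsucc_B by auto

lemma Cs_sub: assumes "c \<in> Cs" shows "c \<subseteq> B"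
proof -
  obtain e where "e \<in> B" "c = orb (dsucc N B) e" using assms unfolding Cs_orb by blast
  then show ?thesis using orb_sub[OF dsucc_img] by simp
qed

lemma Cs_closed: assumes "c \<in> Cs" shows "dsucc N B ` c \<subseteq> c"
proof -
  obtain e where "e \<in> B" "c = orb (dsucc N B) e" using assms unfolding Cs_orb by blast
  then show ?thesis using orb_closed by simp
qed

lemma Cs_finite: "finite Cs"
proof -
  have "Cs = orb (dsucc N B) ` B" unfolding Cs_orb setcompr_eq_image by simp
  then show ?thesis using finite_B by simp
qed

lemma Cs_disj: assumes "c \<in> Cs" "c' \<in> Cs" "c \<noteq> c'" shows "c \<inter> c' = {}"
proof -
  obtain e where "e \<in> B" "c = orb (dsucc N B) e" using assms unfolding Cs_orb by blast
  moreover obtain e' where "e' \<in> B" "c' = orb (dsucc N B) e'" using assms unfolding Cs_orb by blast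
  ultimately show ?thesis using orb_disj[OF finite_B dsucc_img dsucc_inj] assms(3) by simp
qed

lemma Cs_Union: "\<Union>Cs = B"
proof
  show "\<Union>Cs \<subseteq> B" using Cs_sub by blast
  show "B \<subseteq> \<Union>Cs"
  proof
    fix e assume "e \<in> B"
    then have "orb (dsucc N B) e \<in> Cs" unfolding Cs_orb by blast
    then show "e \<in> \<Union>Cs" using orb_self[of e "dsucc N B"] by blast
  qed
qed

lemma sum_Cs: "(\<Sum>e\<in>\<Union>W. f e) = (\<Sum>c\<in>W. \<Sum>e\<in>c. f e)" if "W \<subseteq> Cs"
proof -
  have "\<forall>A\<in>W. finite A" using Cs_sub finite_B finite_subset that by blast
  moreover have "\<forall>A\<in>W. \<forall>B\<in>W. A \<noteq> B \<longrightarrow> A \<inter> B = {}" using Cs_disj that by blast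
  ultimately show ?thesis using sum.Union_disjoint[of W f] by (simp add: comp_def)
qed

lemma gamma_props: fixes j
  shows "gamma N i j x \<subseteq> B \<and> dsucc N B ` gamma N i j x \<subseteq> gamma N i j x \<and> (\<Sum>e\<in>gamma N i j x. snd e) = (0,0)"
proof (cases "\<exists>!c. c \<in> Cs \<and> \<not> winding c \<and> separates N c i j")
  case True
  define g where "g = (THE c. c \<in> Cs \<and> \<not> winding c \<and> separates N c i j)"
  have gg: "gamma N i j x = g" unfolding gamma_def g_def using True by (simp add: Let_def)
  have "g \<in> Cs \<and> \<not> winding g \<and> separates N g i j" unfolding g_def using theI'[OF True] .
  then show ?thesis unfolding gg using Cs_sub Cs_closed by (auto simp: winding_def)
next
  case False
  define W where "W = {c \<in> Cs. winding c}"
  have gg: "gamma N i j x = \<Union>W" unfolding gamma_def W_def using False by (simp add: Let_def)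
  have sub: "\<Union>W \<subseteq> B" using Cs_sub W_def by auto
  have cl: "dsucc N B ` \<Union>W \<subseteq> \<Union>W" using Cs_closed W_def by blast
  have "(\<Sum>e\<in>B. snd e) = (\<Sum>c\<in>Cs. \<Sum>e\<in>c. snd e)" using sum_Cs[of Cs "snd"] Cs_Union by simp
  also have "\<dots> = (\<Sum>c\<in>W. \<Sum>e\<in>c. snd e) + (\<Sum>c\<in>Cs - W. \<Sum>e\<in>c. snd e)"
  proof -
    have "W \<subseteq> Cs" by (auto simp: W_def)
    then show ?thesis using sum.subset_diff[of W Cs "\<lambda>c. \<Sum>e\<in>c. snd e"] Cs_finite by (simp add: add.commute)
  qed
  also have "(\<Sum>c\<in>Cs - W. \<Sum>e\<in>c. snd e) = 0"
    by (rule sum.neutral) (auto simp: W_def winding_def zero_prod_def)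
  also have "(\<Sum>c\<in>W. \<Sum>e\<in>c. snd e) = (\<Sum>e\<in>\<Union>W. snd e)" using sum_Cs[of W "snd"] W_def by simp
  finally have "(\<Sum>e\<in>\<Union>W. snd e) = (0,0)" using sum_B_snd by simp
  then show ?thesis unfolding gg using sub cl by simp
qed

end

locale en = cfg + fixes j :: vert
begin

abbreviation "g \<equiv> gamma N i j x"
abbreviation "L \<equiv> Lset N g i"

lemma gp: "g \<subseteq> B" "dsucc N B ` g \<subseteq> g" "(\<Sum>e\<in>g. snd e) = (0,0)"
  using gamma_props[of j] by auto

sublocale fg: flux N x i g
  by unfold_locales (use gp in auto)

lemma per: "fg.R 0 = 0" "fg.Cc 0 = 0" using fg.periods gp(3) by auto

lemma wall: "l \<in> torus N \<Longrightarrow> d \<in> units \<Longrightarrow> fg.w (shiftv N l d) = fg.w l + fg.phi l d"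
  using fg.w_all per by blast

lemma avoid_w: assumes "avoid N g a b" shows "fg.w b = fg.w a"
proof -
  obtain d where d: "a \<in> torus N" "d \<in> units" "b = shiftv N a d" "dualedge N a d \<notin> g" "dualedge N b (negv d) \<notin> g"
    using assms unfolding avoid_def by blast
  have "fg.phi a d = 0" unfolding fg.phi_def fg.ind_def using d by (simp add: negv_def)
  then show ?thesis using wall[OF d(1,2)] d(3) by simp
qed

lemma L_w: assumes "k \<in> L" shows "fg.w k = fg.w i"
proof -
  have "(avoid N g)\<^sup>*\<^sup>* i k" using assms unfolding Lset_def by blast
  then show ?thesis by (induction rule: rtranclp_induct) (auto dest: avoid_w)
qed

lemma avoid_C: assumes "a \<in> C" "d \<in> units" "shiftv N a d \<in> C" shows "avoid N g a (shiftv N a d)"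
proof -
  have at: "a \<in> torus N" using assms C_sub by auto
  have bt: "shiftv N a d \<in> torus N" using sh_torus[OF Npos] .
  have nd: "negv d \<in> units" using assms(2) by (auto simp: units_iff negv_def)
  have bk: "shiftv N (shiftv N a d) (negv d) = a" using sh_add[OF Npos, of a d "negv d"] sh_zero[OF at] by (simp add: negv_def)
  have "dualedge N a d \<notin> B" using dual_in_B[OF at assms(2)] assms(3) by simp
  moreover have "dualedge N (shiftv N a d) (negv d) \<notin> B" using dual_in_B[OF bt nd] bk assms(1) by simp
  ultimately show ?thesis unfolding avoid_def using at assms(2) gp by blast
qed

lemma C_L: "C \<subseteq> L"
proof
  fix k assume "k \<in> C"
  then have r: "(\<lambda>a b. nn_adj N a b \<and> x a \<ge> x i \<and> x b \<ge> x i)\<^sup>*\<^sup>* i k" by (auto simp: comp_def)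
  have "(avoid N g)\<^sup>*\<^sup>* i k \<and> k \<in> C" using r
  proof (induction rule: rtranclp_induct)
    case base then show ?case using i_C by simp
  next
    case (step a b)
    then obtain d where d: "d \<in> units" "b = shiftv N a d" unfolding nn_adj_def by blast
    have "b \<in> C" using C_step[of a d] step d by simp
    then have "avoid N g a b" using avoid_C[of a d] step d by simp
    then show ?case using step \<open>b \<in> C\<close> by (meson rtranclp.rtrancl_into_rtrancl)
  qed
  then show "k \<in> L" using C_sub \<open>k \<in> C\<close> unfolding Lset_def by blast
qed

lemma g_sep: assumes "l \<in> torus N" "d \<in> units" "dualedge N l d \<in> g"
  shows "l \<in> L \<and> shiftv N l d \<notin> L \<and> l \<in> C \<and> shiftv N l d \<notin> C"
proof -
  have lC: "l \<in> C" "shiftv N l d \<notin> C" using assms dual_in_B[OF assms(1,2)] gp by auto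
  have mt: "shiftv N l d \<in> torus N" using sh_torus[OF Npos] .
  have nd: "(- fst d, - snd d) \<in> units" using assms(2) by (auto simp: units_iff)
  have "dualedge N (shiftv N l d) (- fst d, - snd d) \<notin> g" using dual_in_B[OF mt nd] lC(2) gp by auto
  then have "fg.phi l d = 1" unfolding fg.phi_def fg.ind_def using assms(3) by simp
  then have "fg.w (shiftv N l d) = fg.w l + 1" using wall[OF assms(1,2)] by simp
  moreover have "fg.w l = fg.w i" using L_w C_L lC(1) by blast
  ultimately have "shiftv N l d \<notin> L" using L_w[of "shiftv N l d"] by auto
  then show ?thesis using lC C_L by blast
qed

lemma cross: assumes "l \<in> torus N" "d \<in> units" "l \<in> L" "shiftv N l d \<notin> L"
  shows "l \<in> C \<and> shiftv N l d \<notin> C"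
proof -
  have mt: "shiftv N l d \<in> torus N" using sh_torus[OF Npos] .
  have nav: "\<not> avoid N g l (shiftv N l d)"
  proof
    assume a: "avoid N g l (shiftv N l d)"
    have "(avoid N g)\<^sup>*\<^sup>* i l" using assms(3) unfolding Lset_def by blast
    from this a have "(avoid N g)\<^sup>*\<^sup>* i (shiftv N l d)" by (rule rtranclp.rtrancl_into_rtrancl)
    then show False using assms(4) mt unfolding Lset_def by blast
  qed
  have nd: "negv d \<in> units" using assms(2) by (auto simp: units_iff negv_def)
  have "dualedge N l d \<in> g \<or> dualedge N (shiftv N l d) (negv d) \<in> g"
    using nav assms(1,2) unfolding avoid_def by blast
  moreover have "dualedge N (shiftv N l d) (negv d) \<notin> g"
  proof
    assume "dualedge N (shiftv N l d) (negv d) \<in> g"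
    then have "shiftv N l d \<in> C" using g_sep[OF mt nd] by blast
    then show False using C_L assms(4) by blast
  qed
  ultimately show ?thesis using g_sep[OF assms(1,2)] by blast
qed


lemma edge_form: assumes "e \<in> edges N" obtains l d where "l \<in> torus N" "d \<in> units" "e = {l, shiftv N l d}"
  using assms that unfolding edges_def nn_adj_def by blast

lemma finite_edges: "finite (edges N)"
proof -
  have "edges N \<subseteq> (\<lambda>p. {fst p, shiftv N (fst p) (snd p)}) ` (torus N \<times> units)"
  proof
    fix e assume "e \<in> edges N"
    then obtain l d where "l \<in> torus N" "d \<in> units" "e = {l, shiftv N l d}" by (rule edge_form)
    then show "e \<in> (\<lambda>p. {fst p, shiftv N (fst p) (snd p)}) ` (torus N \<times> units)"
      by (intro rev_image_eqI[of "(l,d)"]) auto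
  qed
  then show ?thesis using finite_torus finite_units finite_subset by blast
qed

lemma T_eq: "(Max (y ` {l, m}) - Min (y ` {l, m}))^2 = ((y l - y m)::int)^2"
  by (cases "y l \<le> y m") (simp_all add: max_def min_def power2_commute)

lemma F_val: "l \<in> torus N \<Longrightarrow> F N i j x l = x l - of_bool (l \<in> L) - x (0,0) + of_bool ((0,0) \<in> L)"
  unfolding F_def by simp

lemma lt_of_notC: assumes "l \<in> C" "d \<in> units" "shiftv N l d \<notin> C" shows "x (shiftv N l d) < x l"
proof -
  have "\<not> x i \<le> x (shiftv N l d)" using C_step[OF assms(1,2)] assms(3) by blast
  then show ?thesis using C_ge[OF assms(1)] by simp
qed

lemma sq1: "(t::int) \<ge> 1 \<Longrightarrow> t^2 - (t - 1)^2 \<ge> 1" by (simp add: power2_eq_square algebra_simps)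
lemma sq2: "(t::int) \<le> -1 \<Longrightarrow> t^2 - (t + 1)^2 \<ge> 1" by (simp add: power2_eq_square algebra_simps)

lemma delta: assumes l: "l \<in> torus N" and d: "d \<in> units"
  shows "(x l - x (shiftv N l d))^2 - (F N i j x l - F N i j x (shiftv N l d))^2 \<ge> of_bool ((l \<in> L) \<noteq> (shiftv N l d \<in> L))"
proof -
  define m where "m = shiftv N l d"
  have mt: "m \<in> torus N" unfolding m_def using sh_torus[OF Npos] .
  have diff: "F N i j x l - F N i j x m = (x l - x m) - (of_bool (l \<in> L) - of_bool (m \<in> L))"
    using F_val[OF l] F_val[OF mt] by simp
  consider "l \<in> L" "m \<notin> L" | "l \<notin> L" "m \<in> L" | "(l \<in> L) = (m \<in> L)" by blast
  then have "(x l - x m)^2 - (F N i j x l - F N i j x m)^2 \<ge> of_bool ((l \<in> L) \<noteq> (m \<in> L))"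
  proof cases
    case 1
    then have "l \<in> C" "m \<notin> C" using cross[OF l d] m_def by auto
    then have "x m < x l" using lt_of_notC[OF _ d] m_def by blast
    then show ?thesis using diff 1 sq1[of "x l - x m"] by simp
  next
    case 2
    have nd: "(- fst d, - snd d) \<in> units" using d by (auto simp: units_iff)
    have bk: "shiftv N m (- fst d, - snd d) = l" unfolding m_def using sh_add[OF Npos, of l d] sh_zero[OF l] by simp
    have "m \<in> C" "l \<notin> C" using cross[OF mt nd] 2 bk by auto
    then have "x l < x m" using lt_of_notC[OF _ nd, of m] bk by simp
    then show ?thesis using diff 2 sq2[of "x l - x m"] by simp
  next
    case 3
    then show ?thesis using diff by simp
  qed
  then show ?thesis unfolding m_def .
qed

lemma energy: "int (card g) \<le> H N x - H N (F N i j x)"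
proof -
  let ?y = "F N i j x"
  define D where "D e = (Max (x ` e) - Min (x ` e))^2 - (Max (?y ` e) - Min (?y ` e))^2" for e
  have HD: "H N x - H N ?y = (\<Sum>e\<in>edges N. D e)" unfolding H_def D_def by (simp add: sum_subtractf)
  have Dl: "D {l, shiftv N l d} \<ge> of_bool ((l \<in> L) \<noteq> (shiftv N l d \<in> L))" if "l \<in> torus N" "d \<in> units" for l d
    using delta[OF that] unfolding D_def T_eq .
  have D0: "D e \<ge> 0" if eE: "e \<in> edges N" for e
  proof -
    obtain l d where "l \<in> torus N" "d \<in> units" "e = {l, shiftv N l d}" using eE by (rule edge_form)
    then show ?thesis using Dl[of l d] by (smt (verit) of_bool_eq(1) of_bool_eq(2))
  qed
  define P where "P = {p \<in> torus N \<times> units. dualedge N (fst p) (snd p) \<in> g}"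
  have gP: "g = (\<lambda>p. dualedge N (fst p) (snd p)) ` P"
  proof
    show "g \<subseteq> (\<lambda>p. dualedge N (fst p) (snd p)) ` P"
    proof
      fix e assume e: "e \<in> g"
      then obtain l d where l: "l \<in> C" "d \<in> units" "e = dualedge N l d" using B_elem gp by blast
      then have "(l,d) \<in> P" using e C_sub unfolding P_def by auto
      then show "e \<in> (\<lambda>p. dualedge N (fst p) (snd p)) ` P" using l(3) by force
    qed
  qed (auto simp: P_def)
  have injP: "inj_on (\<lambda>p. dualedge N (fst p) (snd p)) P"
  proof (rule inj_onI)
    fix p q assume "p \<in> P" "q \<in> P" "dualedge N (fst p) (snd p) = dualedge N (fst q) (snd q)"
    then have "fst p = fst q \<and> snd p = snd q" using dualedge_inj[of "fst p" "fst q" "snd p" "snd q"] unfolding P_def by auto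
    then show "p = q" by (simp add: prod_eq_iff)
  qed
  have cg: "card g = card P" unfolding gP using card_image[OF injP] .
  define psi where "psi p = {fst p, shiftv N (fst p) (snd p)}" for p
  have sepP: "fst p \<in> L \<and> shiftv N (fst p) (snd p) \<notin> L" if "p \<in> P" for p
    using g_sep[of "fst p" "snd p"] that unfolding P_def by auto
  have injpsi: "inj_on psi P"
  proof (rule inj_onI)
    fix p q assume p: "p \<in> P" and q: "q \<in> P" and eq: "psi p = psi q"
    have fp: "fst p = fst q" using sepP[OF p] sepP[OF q] eq unfolding psi_def by (auto simp: doubleton_eq_iff)
    then have "shiftv N (fst p) (snd p) = shiftv N (fst p) (snd q)" using sepP[OF p] sepP[OF q] eq unfolding psi_def
      by (auto simp: doubleton_eq_iff)
    then have "snd p = snd q" using sh_units_inj[OF N3] p q unfolding P_def by auto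
    then show "p = q" using fp by (simp add: prod_eq_iff)
  qed
  have psiE: "psi ` P \<subseteq> edges N"
  proof
    fix e assume "e \<in> psi ` P"
    then obtain p where p: "p \<in> P" "e = psi p" by blast
    then have "nn_adj N (fst p) (shiftv N (fst p) (snd p))" unfolding P_def nn_adj_def by auto
    then show "e \<in> edges N" unfolding edges_def psi_def p(2) by blast
  qed
  have D1: "D e \<ge> 1" if eP: "e \<in> psi ` P" for e
  proof -
    obtain p where p: "p \<in> P" "e = psi p" using eP by blast
    have "fst p \<in> torus N" "snd p \<in> units" using p(1) unfolding P_def by auto
    then show ?thesis using Dl[of "fst p" "snd p"] sepP[OF p(1)] p(2) unfolding psi_def by simp
  qed
  have "int (card g) = int (card (psi ` P))" using cg card_image[OF injpsi] by simp
  also have "\<dots> = (\<Sum>e\<in>psi ` P. 1)" by simp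
  also have "\<dots> \<le> (\<Sum>e\<in>psi ` P. D e)" by (rule sum_mono) (use D1 in auto)
  also have "\<dots> \<le> (\<Sum>e\<in>edges N. D e)" by (rule sum_mono2[OF finite_edges psiE]) (use D0 in auto)
  finally show ?thesis using HD by simp
qed

end

lemma infsum_UN_disj:
  fixes f :: "'a \<Rightarrow> real"
  assumes "finite I" "f summable_on S" "\<And>a. a\<in>I \<Longrightarrow> A a \<subseteq> S"
    "\<And>a b. a\<in>I \<Longrightarrow> b\<in>I \<Longrightarrow> a\<noteq>b \<Longrightarrow> A a \<inter> A b = {}"
  shows "infsum f (\<Union>a\<in>I. A a) = (\<Sum>a\<in>I. infsum f (A a))"
  using assms(1,3,4)
proof (induction I rule: finite_induct)
  case empty then show ?case by simp
next
  case (insert a I)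
  have d: "A a \<inter> (\<Union>b\<in>I. A b) = {}" using insert.prems(2) insert.hyps(2) by fastforce
  have s1: "f summable_on A a" using summable_on_subset_banach[OF assms(2)] insert.prems(1) by simp
  have s2: "f summable_on (\<Union>b\<in>I. A b)" using summable_on_subset_banach[OF assms(2)] insert.prems(1) by blast
  have "infsum f (\<Union>b\<in>insert a I. A b) = infsum f (A a \<union> (\<Union>b\<in>I. A b))" by simp
  also have "\<dots> = infsum f (A a) + infsum f (\<Union>b\<in>I. A b)" by (rule infsum_Un_disjoint[OF s1 s2 d])
  also have "infsum f (\<Union>b\<in>I. A b) = (\<Sum>b\<in>I. infsum f (A b))" using insert by simp
  finally show ?case using insert.hyps by simp
qed

context tor begin

lemma gw_pos: "gw N \<beta> x \<ge> 0" unfolding gw_def by simp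

lemma Z_nonneg: "Zpart N \<beta> \<ge> 0" unfolding Zpart_def by (rule infsum_nonneg) (rule gw_pos)

lemma Prob_nonneg: "Prob N \<beta> S \<ge> 0" unfolding Prob_def using Z_nonneg
  by (simp add: infsum_nonneg gw_pos)

lemma Prob_nonsum: "\<not> gw N \<beta> summable_on Omega N \<Longrightarrow> Prob N \<beta> S = 0"
  unfolding Prob_def Zpart_def by (simp add: infsum_not_exists)

lemma Prob_le1: "Prob N \<beta> S \<le> 1"
proof (cases "gw N \<beta> summable_on Omega N")
  case True
  have "infsum (gw N \<beta>) (Omega N \<inter> S) \<le> Zpart N \<beta>" unfolding Zpart_def
    by (rule infsum_mono2[OF summable_on_subset_banach[OF True] True]) (auto simp: gw_pos)
  then show ?thesis unfolding Prob_def using Z_nonneg[of \<beta>]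
    by (cases "Zpart N \<beta> = 0") (auto simp: divide_le_eq_1)
next
  case False then show ?thesis using Prob_nonsum by simp
qed

lemma origin_t: "(0,0) \<in> torus N" using Npos by (simp add: torus_def)

lemma F_Omega: assumes "x \<in> Omega N" shows "F N i j x \<in> Omega N"
  using assms origin_t unfolding Omega_def F_def by auto

lemma F_diff: assumes "i \<in> torus N" "j \<in> torus N"
  shows "F N i j x i - F N i j x j \<ge> x i - x j - 1"
  using assms unfolding F_def by (auto simp: of_bool_def)

lemma F_inj: assumes "i \<in> torus N" shows "inj_on (F N i j) {x \<in> Omega N. gamma N i j x = g0}"
proof (rule inj_onI)
  fix x y assume x: "x \<in> {x \<in> Omega N. gamma N i j x = g0}" and y: "y \<in> {x \<in> Omega N. gamma N i j x = g0}"
    and eq: "F N i j x = F N i j y"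
  show "x = y"
  proof
    fix l
    show "x l = y l"
    proof (cases "l \<in> torus N")
      case True
      have "F N i j x l = F N i j y l" using eq by simp
      then show ?thesis using x y True unfolding F_def Omega_def by auto
    next
      case False then show ?thesis using x y unfolding Omega_def by (cases l) auto
    qed
  qed
qed

lemma gw_le: assumes "i \<in> torus N" "\<beta> > 0"
  shows "gw N \<beta> x \<le> exp (- \<beta> * real (card (gamma N i j x))) * gw N \<beta> (F N i j x)"
proof -
  interpret e: en N x i j by unfold_locales (rule assms(1))
  have "real_of_int (H N x) \<ge> real (card (gamma N i j x)) + real_of_int (H N (F N i j x))"
    using e.energy by linarith
  then have "\<beta> * (real (card (gamma N i j x)) + real_of_int (H N (F N i j x))) \<le> \<beta> * real_of_int (H N x)"
    using assms(2) by (intro mult_left_mono) auto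
  then have "- \<beta> * real_of_int (H N x) \<le> - \<beta> * real (card (gamma N i j x)) + - \<beta> * real_of_int (H N (F N i j x))"
    by (simp add: algebra_simps)
  then show ?thesis unfolding gw_def by (simp add: exp_add[symmetric])
qed

lemma claim2: assumes ij: "i \<in> torus N" "j \<in> torus N" and b: "\<beta> > 0" and k: "k \<ge> (1::nat)"
  shows "Prob N \<beta> {x. x i - x j \<ge> int k \<and> gamma N i j x = g0}
           \<le> exp (- \<beta> * real (card g0)) * Prob N \<beta> {x. x i - x j \<ge> int k - 1}"
proof (cases "gw N \<beta> summable_on Omega N")
  case False then show ?thesis using Prob_nonsum by simp
next
  case True
  define A where "A = Omega N \<inter> {x. x i - x j \<ge> int k \<and> gamma N i j x = g0}"
  define Bk where "Bk = Omega N \<inter> {x. x i - x j \<ge> int k - 1}"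
  define c where "c = exp (- \<beta> * real (card g0))"
  have c0: "c \<ge> 0" unfolding c_def by simp
  have inj: "inj_on (F N i j) A"
    by (rule inj_on_subset[OF F_inj[OF ij(1), of j g0]]) (auto simp: A_def)
  have FA: "F N i j ` A \<subseteq> Bk"
  proof
    fix y assume "y \<in> F N i j ` A"
    then obtain x where x: "x \<in> A" "y = F N i j x" by blast
    have "F N i j x \<in> Omega N" using F_Omega x(1) by (auto simp: A_def)
    moreover have "F N i j x i - F N i j x j \<ge> int k - 1" using F_diff[OF ij, of x] x(1) by (auto simp: A_def)
    ultimately show "y \<in> Bk" using x(2) by (simp add: Bk_def)
  qed
  have sA: "gw N \<beta> summable_on A" by (rule summable_on_subset_banach[OF True]) (auto simp: A_def)
  have sB: "gw N \<beta> summable_on Bk" by (rule summable_on_subset_banach[OF True]) (auto simp: Bk_def)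
  have sFA: "gw N \<beta> summable_on (F N i j ` A)" by (rule summable_on_subset_banach[OF sB FA])
  have "(gw N \<beta> \<circ> F N i j) summable_on A" using sFA summable_on_reindex[OF inj, of "gw N \<beta>"] by simp
  then have sFA': "(\<lambda>x. gw N \<beta> (F N i j x)) summable_on A" unfolding o_def .
  have "infsum (gw N \<beta>) A \<le> infsum (\<lambda>x. c * gw N \<beta> (F N i j x)) A"
  proof (rule infsum_mono[OF sA summable_on_cmult_right[OF sFA']])
    fix x assume "x \<in> A"
    then have "gamma N i j x = g0" by (simp add: A_def)
    then show "gw N \<beta> x \<le> c * gw N \<beta> (F N i j x)" using gw_le[OF ij(1) b, of x j] unfolding c_def by simp
  qed
  also have "\<dots> = c * infsum (\<lambda>x. gw N \<beta> (F N i j x)) A" by (rule infsum_cmult_right') 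
  also have "infsum (\<lambda>x. gw N \<beta> (F N i j x)) A = infsum (gw N \<beta>) (F N i j ` A)"
    using infsum_reindex[OF inj, of "gw N \<beta>"] unfolding o_def by simp
  also have "infsum (gw N \<beta>) (F N i j ` A) \<le> infsum (gw N \<beta>) Bk"
    by (rule infsum_mono2[OF sFA sB FA]) (simp add: gw_pos)
  finally have le: "infsum (gw N \<beta>) A \<le> c * infsum (gw N \<beta>) Bk" using c0 by (simp add: mult_left_mono)
  have "Prob N \<beta> {x. x i - x j \<ge> int k \<and> gamma N i j x = g0} = infsum (gw N \<beta>) A / Zpart N \<beta>"
    unfolding Prob_def A_def ..
  also have "\<dots> \<le> (c * infsum (gw N \<beta>) Bk) / Zpart N \<beta>" by (rule divide_right_mono[OF le Z_nonneg])
  also have "\<dots> = c * Prob N \<beta> {x. x i - x j \<ge> int k - 1}" unfolding Prob_def Bk_def by simp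
  finally show ?thesis unfolding c_def .
qed

lemma Gamma_finite: assumes "i \<in> torus N" shows "finite (Gamma N i j)"
proof -
  have "Gamma N i j \<subseteq> Pow (torus N \<times> units)"
  proof
    fix g assume "g \<in> Gamma N i j"
    then obtain x where gx: "g = gamma N i j x" unfolding Gamma_def by blast
    interpret c: cfg N x i by unfold_locales (rule assms)
    show "g \<in> Pow (torus N \<times> units)" using c.gamma_props[of j] c.B_sub gx by auto
  qed
  moreover have "finite (torus N \<times> units)" by (simp add: torus_def units_def)
  ultimately show ?thesis using finite_subset by blast
qed

lemma claim3: assumes ij: "i \<in> torus N" "j \<in> torus N" and b: "\<beta> > 0" and k: "k \<ge> (1::nat)"
  shows "Prob N \<beta> {x. x i - x j \<ge> int k}
           \<le> Prob N \<beta> {x. x i - x j \<ge> int k - 1} * (\<Sum>g\<in>Gamma N i j. exp (- \<beta> * real (card g)))"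
proof -
  have eqP: "Prob N \<beta> {x. x i - x j \<ge> int k} = (\<Sum>g\<in>Gamma N i j. Prob N \<beta> {x. x i - x j \<ge> int k \<and> gamma N i j x = g})"
  proof (cases "gw N \<beta> summable_on Omega N")
    case False then show ?thesis using Prob_nonsum by simp
  next
    case True
    have U: "Omega N \<inter> {x. x i - x j \<ge> int k} = (\<Union>g\<in>Gamma N i j. Omega N \<inter> {x. x i - x j \<ge> int k \<and> gamma N i j x = g})"
    proof
      show "Omega N \<inter> {x. x i - x j \<ge> int k} \<subseteq> (\<Union>g\<in>Gamma N i j. Omega N \<inter> {x. x i - x j \<ge> int k \<and> gamma N i j x = g})"
      proof
        fix x assume x: "x \<in> Omega N \<inter> {x. x i - x j \<ge> int k}"
        then have "x \<in> Omega_ij N i j" using k unfolding Omega_ij_def by auto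
        then have "gamma N i j x \<in> Gamma N i j" unfolding Gamma_def by blast
        then show "x \<in> (\<Union>g\<in>Gamma N i j. Omega N \<inter> {x. x i - x j \<ge> int k \<and> gamma N i j x = g})" using x by blast
      qed
    qed blast
    have "infsum (gw N \<beta>) (Omega N \<inter> {x. x i - x j \<ge> int k}) = (\<Sum>g\<in>Gamma N i j. infsum (gw N \<beta>) (Omega N \<inter> {x. x i - x j \<ge> int k \<and> gamma N i j x = g}))"
      unfolding U by (rule infsum_UN_disj[OF Gamma_finite[OF ij(1)] True]) auto
    then show ?thesis unfolding Prob_def by (simp add: sum_divide_distrib)
  qed
  also have "\<dots> \<le> (\<Sum>g\<in>Gamma N i j. exp (- \<beta> * real (card g)) * Prob N \<beta> {x. x i - x j \<ge> int k - 1})"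
    by (rule sum_mono) (rule claim2[OF ij b k])
  also have "\<dots> = Prob N \<beta> {x. x i - x j \<ge> int k - 1} * (\<Sum>g\<in>Gamma N i j. exp (- \<beta> * real (card g)))"
    by (simp add: sum_distrib_right mult.commute)
  finally show ?thesis .
qed

lemma claim4: assumes ij: "i \<in> torus N" "j \<in> torus N" and b: "\<beta> > 0"
  shows "Prob N \<beta> {x. x i - x j \<ge> int k} \<le> (\<Sum>g\<in>Gamma N i j. exp (- \<beta> * real (card g))) ^ k"
proof (induction k)
  case 0 then show ?case using Prob_le1 by simp
next
  case (Suc k)
  let ?S = "(\<Sum>g\<in>Gamma N i j. exp (- \<beta> * real (card g)))"
  have S0: "?S \<ge> 0" by (rule sum_nonneg) simp
  have "Prob N \<beta> {x. x i - x j \<ge> int (Suc k)} \<le> Prob N \<beta> {x. x i - x j \<ge> int (Suc k) - 1} * ?S"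
    by (rule claim3[OF ij b]) simp
  also have "\<dots> = Prob N \<beta> {x. x i - x j \<ge> int k} * ?S" by simp
  also have "\<dots> \<le> ?S ^ k * ?S" by (rule mult_right_mono[OF Suc.IH S0])
  finally show ?case by (simp add: mult.commute)
qed

end

theorem mainTheorem5:
  fixes \<beta> :: real and N :: nat and i j :: vert
  assumes "\<beta> > 0" and "N \<ge> 4" and "i \<in> torus N" and "j \<in> torus N" and "i \<noteq> j"
  shows "(\<forall>x\<in>Omega_ij N i j. H N x - H N (F N i j x) \<ge> int (card (gamma N i j x)))
    \<and> (\<forall>g\<in>Gamma N i j. \<forall>k::nat. k \<ge> 1 \<longrightarrow>
         Prob N \<beta> {x. x i - x j \<ge> int k \<and> gamma N i j x = g}
           \<le> exp (- \<beta> * real (card g)) * Prob N \<beta> {x. x i - x j \<ge> int k - 1})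
    \<and> (\<forall>k::nat. k \<ge> 1 \<longrightarrow>
         Prob N \<beta> {x. x i - x j \<ge> int k}
           \<le> Prob N \<beta> {x. x i - x j \<ge> int k - 1} * (\<Sum>g\<in>Gamma N i j. exp (- \<beta> * real (card g))))
    \<and> (\<forall>k::nat. k \<ge> 1 \<longrightarrow>
         Prob N \<beta> {x. x i - x j \<ge> int k}
           \<le> (\<Sum>g\<in>Gamma N i j. exp (- \<beta> * real (card g))) ^ k)"
proof -
  interpret t: tor N by unfold_locales (rule assms(2))
  have c1: "\<forall>x\<in>Omega_ij N i j. H N x - H N (F N i j x) \<ge> int (card (gamma N i j x))"
  proof
    fix x assume "x \<in> Omega_ij N i j"
    interpret e: en N x i j by unfold_locales (rule assms(3))
    show "H N x - H N (F N i j x) \<ge> int (card (gamma N i j x))" by (rule e.energy)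
  qed
  show ?thesis using c1 t.claim2[OF assms(3,4,1)] t.claim3[OF assms(3,4,1)] t.claim4[OF assms(3,4,1)] by blast
qed


end
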